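(* Let $S\subseteq\mathbb{N}$ with $0\in S$ and $1\in S$. Then there exists a continuous function $f:[0,1]\to\mathbb{R}$ with $\Omega_f=S$.
   Context: $\mathbb{N}=\{0,1,2,\dots\}$. For a continuous $f:[0,1]\to\mathbb{R}$, $\Omega_f=\{n\in\mathbb{N}\cup\{\infty\} : \exists x\in\mathbb{R}\text{ with } |f^{-1}(x)|=n\}$, where $|f^{-1}(x)|$ is the cardinality of $\{t\in[0,1]: f(t)=x\}$ and $\infty$ stands for an infinite cardinality. The set $S$ may be finite or infinite. *)

theory Defs
  imports "HOL-Analysis.Analysis" "HOL-Library.Extended_Nat"
begin

definition ecard :: "'a set \<Rightarrow> enat" where
  "ecard A = (if finite A then enat (card A) else \<infinity>)"

definition Omega :: "(real \<Rightarrow> real) \<Rightarrow> enat set" where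
  "Omega f = {n. \<exists>x::real. ecard {t \<in> {0..1}. f t = x} = n}"

end

theory Submission
  imports Defs
begin


definition lv :: "(real \<Rightarrow> real) \<Rightarrow> real \<Rightarrow> real set" where
  "lv g y = {s \<in> {0..<1}. g s = y}"

definition prof :: "(real \<Rightarrow> real) \<Rightarrow> (real \<Rightarrow> nat) \<Rightarrow> bool" where
  "prof g P \<longleftrightarrow> (\<forall>y. finite (lv g y) \<and> card (lv g y) = P y)"

definition cat :: "(real \<Rightarrow> real) \<Rightarrow> (real \<Rightarrow> real) \<Rightarrow> real \<Rightarrow> real" where
  "cat g h t = (if t \<le> 1/2 then g (2*t) else h (2*t - 1))"

definition rv :: "(real \<Rightarrow> real) \<Rightarrow> real \<Rightarrow> real" where
  "rv g t = g (1 - t)"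

definition af :: "real \<Rightarrow> real \<Rightarrow> (real \<Rightarrow> real) \<Rightarrow> real \<Rightarrow> real" where
  "af p q g t = p + (q - p) * g t"

definition ind :: "bool \<Rightarrow> nat" where "ind b = (if b then 1 else 0)"

lemma lv_cat:
  assumes "g 1 = h 0"
  shows "lv (cat g h) y = (\<lambda>s. s/2) ` lv g y \<union> (\<lambda>s. (s+1)/2) ` lv h y"
proof (rule set_eqI, rule iffI)
  fix t assume "t \<in> lv (cat g h) y"
  hence t: "0 \<le> t" "t < 1" "cat g h t = y" by (auto simp: lv_def)
  show "t \<in> (\<lambda>s. s/2) ` lv g y \<union> (\<lambda>s. (s+1)/2) ` lv h y"
  proof (cases "t < 1/2")
    case True
    hence "2*t \<in> lv g y" using t by (auto simp: lv_def cat_def)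
    moreover have "t = (2*t)/2" by simp
    ultimately show ?thesis by blast
  next
    case False
    have "h (2*t - 1) = y"
    proof (cases "t = 1/2")
      case True
      hence "2*t = 1" "2*t - 1 = 0" by simp_all
      have "cat g h t = g 1" using True \<open>2*t = 1\<close> by (simp add: cat_def)
      hence "y = h 0" using t assms by simp
      thus ?thesis using \<open>2*t - 1 = 0\<close> by simp
    next
      case f2: False thus ?thesis using t False by (simp add: cat_def)
    qed
    hence "2*t - 1 \<in> lv h y" using t False by (auto simp: lv_def)
    moreover have "t = ((2*t - 1)+1)/2" by simp
    ultimately show ?thesis by blast
  qed
next
  fix t assume "t \<in> (\<lambda>s. s/2) ` lv g y \<union> (\<lambda>s. (s+1)/2) ` lv h y"
  thus "t \<in> lv (cat g h) y"
  proof
    assume "t \<in> (\<lambda>s. s/2) ` lv g y"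
    thus ?thesis using assms by (auto simp: lv_def cat_def)
  next
    assume "t \<in> (\<lambda>s. (s+1)/2) ` lv h y"
    then obtain s where s: "s \<in> lv h y" "t = (s+1)/2" by auto
    have e: "2*t - 1 = s" using s by simp
    show ?thesis
    proof (cases "s = 0")
      case True
      hence t2: "2*t = 1" "t \<le> 1/2" using s by auto
      have "cat g h t = g 1" using t2 by (simp add: cat_def)
      moreover have "h 0 = y" using s True by (simp add: lv_def)
      ultimately have "cat g h t = y" using assms by simp
      moreover have "0 \<le> t" "t < 1" using t2 by auto
      ultimately show ?thesis by (simp add: lv_def)
    next
      case False
      hence "\<not> t \<le> 1/2" using s by (auto simp: lv_def)
      thus ?thesis using s e by (auto simp: lv_def cat_def)
    qed
  qed
qed

lemma prof_cat:
  assumes "prof g P" "prof h Q" "g 1 = h 0"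
  shows "prof (cat g h) (\<lambda>y. P y + Q y)"
  unfolding prof_def
proof
  fix y
  have d: "(\<lambda>s. s/2) ` lv g y \<inter> (\<lambda>s. (s+1)/2) ` lv h y = {}"
    by (auto simp: lv_def)
  have i1: "inj_on (\<lambda>s::real. s/2) A" for A by (auto simp: inj_on_def)
  have i2: "inj_on (\<lambda>s::real. (s+1)/2) A" for A by (auto simp: inj_on_def)
  have f: "finite (lv g y)" "finite (lv h y)" "card (lv g y) = P y" "card (lv h y) = Q y"
    using assms unfolding prof_def by auto
  show "finite (lv (cat g h) y) \<and> card (lv (cat g h) y) = P y + Q y"
    unfolding lv_cat[of g h y, OF assms(3)]
    using f d by (simp add: card_Un_disjoint card_image i1 i2)
qed

lemma lv_af:
  assumes "p \<noteq> q"
  shows "lv (af p q g) y = lv g ((y - p)/(q - p))"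
  using assms by (auto simp: lv_def af_def field_simps)

lemma prof_af:
  assumes "prof g P" "p \<noteq> q"
  shows "prof (af p q g) (\<lambda>y. P ((y - p)/(q - p)))"
  using assms unfolding prof_def lv_af[OF assms(2)] by auto

lemma prof_id: "prof (\<lambda>t. t) (\<lambda>y. ind (0 \<le> y \<and> y < 1))"
proof -
  have "lv (\<lambda>t. t) y = (if 0 \<le> y \<and> y < 1 then {y} else {})" for y
    by (auto simp: lv_def)
  thus ?thesis by (auto simp: prof_def ind_def)
qed

lemma lv_rv:
  "lv (rv g) y = (\<lambda>s. 1 - s) ` ((lv g y - {0}) \<union> (if g 1 = y then {1} else {}))"
proof (rule set_eqI, rule iffI)
  fix t assume "t \<in> lv (rv g) y"
  hence t: "0 \<le> t" "t < 1" "g (1 - t) = y" by (auto simp: lv_def rv_def)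
  show "t \<in> (\<lambda>s. 1 - s) ` ((lv g y - {0}) \<union> (if g 1 = y then {1} else {}))"
  proof (cases "t = 0")
    case True thus ?thesis using t by (auto simp: image_iff)
  next
    case False
    hence "1 - t \<in> lv g y - {0}" using t by (auto simp: lv_def)
    moreover have "t = 1 - (1 - t)" by simp
    ultimately show ?thesis by blast
  qed
next
  fix t assume "t \<in> (\<lambda>s. 1 - s) ` ((lv g y - {0}) \<union> (if g 1 = y then {1} else {}))"
  thus "t \<in> lv (rv g) y" by (auto simp: lv_def rv_def split: if_splits)
qed

lemma prof_rv:
  assumes "prof g P"
  shows "prof (rv g) (\<lambda>y. P y + ind (g 1 = y) - ind (g 0 = y))"
  unfolding prof_def
proof
  fix y
  have f: "finite (lv g y)" "card (lv g y) = P y" using assms by (auto simp: prof_def)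
  have inj: "inj_on (\<lambda>s::real. 1 - s) A" for A by (auto simp: inj_on_def)
  have d: "(lv g y - {0}) \<inter> (if g 1 = y then {1} else {}) = {}" by (auto simp: lv_def)
  have c1: "card (lv g y - {0}) = P y - ind (g 0 = y)"
  proof (cases "g 0 = y")
    case True
    hence "0 \<in> lv g y" by (auto simp: lv_def)
    thus ?thesis using f True by (simp add: ind_def)
  next
    case False
    hence "0 \<notin> lv g y" by (auto simp: lv_def)
    thus ?thesis using f False by (simp add: ind_def)
  qed
  have ge: "g 0 = y \<Longrightarrow> P y \<ge> 1"
  proof -
    assume "g 0 = y"
    hence "0 \<in> lv g y" by (auto simp: lv_def)
    hence "card (lv g y) > 0" using f card_gt_0_iff by blast
    thus "P y \<ge> 1" using f by simp
  qed
  show "finite (lv (rv g) y) \<and> card (lv (rv g) y) = P y + ind (g 1 = y) - ind (g 0 = y)"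
    unfolding lv_rv using f d c1 ge
    by (auto simp: card_image inj card_Un_disjoint ind_def)
qed



definition ic :: "(nat \<Rightarrow> real \<Rightarrow> real) \<Rightarrow> real \<Rightarrow> real \<Rightarrow> real" where
  "ic gs L t = (if t < 1 then gs (nat \<lfloor>t/(1-t)\<rfloor>) (t/(1-t) - of_int \<lfloor>t/(1-t)\<rfloor>) else L)"

definition psi :: "nat \<Rightarrow> real \<Rightarrow> real" where
  "psi n s = (real n + s)/(real n + 1 + s)"

lemma psi_u: assumes "0 \<le> s" shows "psi n s / (1 - psi n s) = real n + s"
proof -
  have p: "real n + 1 + s > 0" using assms by simp
  have "1 - psi n s = 1 / (real n + 1 + s)" using p by (simp add: psi_def field_simps)
  thus ?thesis using p by (simp add: psi_def field_simps)
qed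

lemma psi_range: assumes "0 \<le> s" shows "0 \<le> psi n s" "psi n s < 1"
  using assms by (auto simp: psi_def divide_simps)

lemma ic_psi: assumes "0 \<le> s" "s < 1" shows "ic gs L (psi n s) = gs n s"
proof -
  have u: "psi n s / (1 - psi n s) = real n + s" by (rule psi_u, fact)
  have fl: "\<lfloor>real n + s\<rfloor> = int n" using assms by (simp add: floor_eq_iff)
  show ?thesis using psi_range[OF assms(1)] by (simp add: ic_def u fl)
qed

lemma lv_ic: "lv (ic gs L) y = (\<Union>n. psi n ` lv (gs n) y)"
proof (rule set_eqI, rule iffI)
  fix t assume "t \<in> lv (ic gs L) y"
  hence t: "0 \<le> t" "t < 1" "ic gs L t = y" by (auto simp: lv_def)
  define u where "u = t/(1-t)"
  have u0: "u \<ge> 0" using t by (simp add: u_def)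
  define n where "n = nat \<lfloor>u\<rfloor>"
  define s where "s = u - of_int \<lfloor>u\<rfloor>"
  have s: "0 \<le> s" "s < 1" unfolding s_def by linarith+
  have nu: "real n + s = u" using u0 by (simp add: n_def s_def)
  have "gs n s = y" using t by (simp add: ic_def n_def s_def u_def)
  hence "s \<in> lv (gs n) y" using s by (simp add: lv_def)
  moreover have "psi n s = t"
  proof -
    have "psi n s = u / (1 + u)" using nu by (simp add: psi_def add.assoc add.commute)
    also have "\<dots> = t" using t by (simp add: u_def field_simps)
    finally show ?thesis .
  qed
  ultimately show "t \<in> (\<Union>n. psi n ` lv (gs n) y)" by blast
next
  fix t assume "t \<in> (\<Union>n. psi n ` lv (gs n) y)"
  then obtain n s where s: "s \<in> lv (gs n) y" "t = psi n s" by auto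
  hence s1: "0 \<le> s" "s < 1" "gs n s = y" by (auto simp: lv_def)
  thus "t \<in> lv (ic gs L) y" using s psi_range[OF s1(1)] ic_psi[OF s1(1,2)] by (simp add: lv_def)
qed

lemma psi_inj: assumes "0 \<le> s" "s < 1" "0 \<le> s'" "s' < 1" "psi n s = psi m s'"
  shows "n = m \<and> s = s'"
proof -
  have "psi n s / (1 - psi n s) = psi m s' / (1 - psi m s')" using assms by simp
  hence e: "real n + s = real m + s'" using psi_u[of s n] psi_u[of s' m] assms by simp
  hence "\<lfloor>real n + s\<rfloor> = \<lfloor>real m + s'\<rfloor>" by simp
  moreover have "\<lfloor>real n + s\<rfloor> = int n" "\<lfloor>real m + s'\<rfloor> = int m" using assms
    by (simp_all add: floor_eq_iff)
  ultimately have "n = m" by simp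
  thus ?thesis using e by simp
qed

lemma prof_ic:
  assumes "\<And>n. prof (gs n) (P n)" and "\<And>y n. N y \<le> n \<Longrightarrow> P n y = 0"
  shows "prof (ic gs L) (\<lambda>y. \<Sum>n<N y. P n y)"
  unfolding prof_def
proof
  fix y
  have fin: "\<And>n. finite (lv (gs n) y)" "\<And>n. card (lv (gs n) y) = P n y"
    using assms(1) by (auto simp: prof_def)
  have emp: "\<And>n. N y \<le> n \<Longrightarrow> lv (gs n) y = {}"
    using fin assms(2) by (metis card_0_eq)
  have eq: "lv (ic gs L) y = (\<Union>n\<in>{..<N y}. psi n ` lv (gs n) y)"
    unfolding lv_ic
  proof (rule set_eqI, rule iffI)
    fix t assume "t \<in> (\<Union>n. psi n ` lv (gs n) y)"
    then obtain n where n: "t \<in> psi n ` lv (gs n) y" by auto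
    hence "n < N y" using emp by (metis empty_iff image_empty not_le)
    thus "t \<in> (\<Union>n\<in>{..<N y}. psi n ` lv (gs n) y)" using n by auto
  qed auto
  have inj: "inj_on (psi n) (lv (gs n) y)" for n
    by (auto simp: inj_on_def lv_def dest: psi_inj)
  have disj: "\<forall>i\<in>{..<N y}. \<forall>j\<in>{..<N y}. i \<noteq> j \<longrightarrow> psi i ` lv (gs i) y \<inter> psi j ` lv (gs j) y = {}"
    by (auto simp: lv_def dest: psi_inj)
  show "finite (lv (ic gs L) y) \<and> card (lv (ic gs L) y) = (\<Sum>n<N y. P n y)"
    unfolding eq using fin disj
    by (simp add: card_UN_disjoint card_image inj)
qed



lemma cont_cat:
  assumes "continuous_on {0..1} g" "continuous_on {0..1} h" "g 1 = h 0"
  shows "continuous_on {0..1} (cat g h)"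
proof -
  have c1: "continuous_on {0..1/2} (cat g h)"
  proof -
    have "continuous_on {0..1/2} (g \<circ> (\<lambda>t. 2*t))"
      by (rule continuous_on_compose, intro continuous_intros,
          rule continuous_on_subset[OF assms(1)], auto)
    moreover have "\<And>t. t \<in> {0..1/2} \<Longrightarrow> (g \<circ> (\<lambda>t. 2*t)) t = cat g h t"
      by (auto simp: cat_def)
    ultimately show ?thesis using continuous_on_cong by blast
  qed
  have c2: "continuous_on {1/2..1} (cat g h)"
  proof -
    have "continuous_on {1/2..1} (h \<circ> (\<lambda>t. 2*t - 1))"
      by (rule continuous_on_compose, intro continuous_intros,
          rule continuous_on_subset[OF assms(2)], auto)
    moreover have "\<And>t. t \<in> {1/2..1} \<Longrightarrow> (h \<circ> (\<lambda>t. 2*t - 1)) t = cat g h t"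
    proof -
      fix t :: real assume t: "t \<in> {1/2..1}"
      show "(h \<circ> (\<lambda>t. 2*t - 1)) t = cat g h t"
      proof (cases "t = 1/2")
        case True thus ?thesis using assms(3) unfolding True cat_def by simp
      next
        case False thus ?thesis using t by (simp add: cat_def)
      qed
    qed
    ultimately show ?thesis using continuous_on_cong by blast
  qed
  have "{0..1::real} = {0..1/2} \<union> {1/2..1}" by auto
  thus ?thesis using continuous_on_closed_Un[OF _ _ c1 c2] by simp
qed

lemma cont_rv: assumes "continuous_on {0..1} g" shows "continuous_on {0..1} (rv g)"
proof -
  have "continuous_on {0..1} (g \<circ> (\<lambda>t. 1 - t))"
    by (rule continuous_on_compose, intro continuous_intros,
        rule continuous_on_subset[OF assms(1)], auto)
  thus ?thesis by (simp add: rv_def o_def)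
qed

lemma cont_af: assumes "continuous_on {0..1} g" shows "continuous_on {0..1} (af p q g)"
  unfolding af_def by (intro continuous_intros assms)

lemma psi_0: "psi n 0 = real n / (real n + 1)" by (simp add: psi_def)
lemma psi_1: "psi n 1 = psi (Suc n) 0" by (simp add: psi_def add.commute)

lemma u_bounds:
  assumes "psi n 0 \<le> t" "t \<le> psi n 1"
  shows "t < 1" "real n \<le> t/(1-t)" "t/(1-t) \<le> real n + 1"
proof -
  have "psi n 1 < 1" using psi_range[of 1 n] by simp
  thus t1: "t < 1" using assms by simp
  have "real n / (real n + 1) \<le> t" using assms psi_0 by simp
  hence "real n \<le> t * (real n + 1)" by (simp add: field_simps)
  thus "real n \<le> t/(1-t)" using t1 by (simp add: field_simps)
  have "t \<le> (real n + 1)/(real n + 2)" using assms by (simp add: psi_def add.commute)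
  hence "t * (real n + 2) \<le> real n + 1" by (simp add: field_simps)
  thus "t/(1-t) \<le> real n + 1" using t1 by (simp add: field_simps)
qed

lemma ic_on_piece:
  assumes "\<And>n. gs n 1 = gs (Suc n) 0" "psi n 0 \<le> t" "t \<le> psi n 1"
  shows "ic gs L t = gs n (t/(1-t) - real n)"
proof -
  note b = u_bounds[OF assms(2,3)]
  show ?thesis
  proof (cases "t/(1-t) = real n + 1")
    case True
    hence "\<lfloor>t/(1-t)\<rfloor> = int n + 1" by simp
    hence "ic gs L t = gs (Suc n) 0" using b True by (simp add: ic_def nat_add_distrib)
    thus ?thesis using True assms(1) by simp
  next
    case False
    hence "t/(1-t) < real n + 1" using b by simp
    hence "\<lfloor>t/(1-t)\<rfloor> = int n" using b by (simp add: floor_eq_iff)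
    thus ?thesis using b by (simp add: ic_def)
  qed
qed

lemma cont_ic:
  assumes c: "\<And>n. continuous_on {0..1} (gs n)"
    and j: "\<And>n. gs n 1 = gs (Suc n) 0"
    and bd: "\<And>n s. s \<in> {0..1} \<Longrightarrow> \<bar>gs n s - L\<bar> \<le> B / (real n + 1)"
  shows "continuous_on {0..1} (ic gs L)"
proof -
  have piece: "continuous_on {psi n 0..psi n 1} (ic gs L)" for n
  proof -
    have "continuous_on {psi n 0..psi n 1} (gs n \<circ> (\<lambda>t. t/(1-t) - real n))"
    proof (rule continuous_on_compose)
      have "\<forall>t\<in>{psi n 0..psi n 1}. 1 - t \<noteq> 0" using u_bounds(1)[of n] by fastforce
      thus "continuous_on {psi n 0..psi n 1} (\<lambda>t. t/(1-t) - real n)"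
        by (intro continuous_intros) auto
      show "continuous_on ((\<lambda>t. t/(1-t) - real n) ` {psi n 0..psi n 1}) (gs n)"
      proof (rule continuous_on_subset[OF c], clarsimp)
        fix t assume "psi n 0 \<le> t" "t \<le> psi n 1"
        from u_bounds[OF this] show "real n \<le> t / (1 - t) \<and> t / (1 - t) - real n \<le> 1" by simp
      qed
    qed
    moreover have "\<And>t. t \<in> {psi n 0..psi n 1} \<Longrightarrow> (gs n \<circ> (\<lambda>t. t/(1-t) - real n)) t = ic gs L t"
      using ic_on_piece[of gs, OF j] by auto
    ultimately show ?thesis using continuous_on_cong by blast
  qed
  have init: "continuous_on {0..psi n 0} (ic gs L)" for n
  proof (induction n)
    case 0 thus ?case by (simp add: psi_0)
  next
    case (Suc n)
    have a: "0 \<le> psi n 0" using psi_range[of 0 n] by simp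
    have b: "psi n 0 \<le> psi n 1" by (simp add: psi_def divide_simps algebra_simps)
    have "{0..psi (Suc n) 0} = {0..psi n 0} \<union> {psi n 0..psi n 1}"
      using a b psi_1[of n] by auto
    thus ?case using continuous_on_closed_Un[OF _ _ Suc piece] by simp
  qed
  have B0: "B \<ge> 0"
  proof -
    have "0 \<le> \<bar>gs 0 0 - L\<bar>" by simp
    also have "\<dots> \<le> B / (real 0 + 1)" using bd[of 0 0] by simp
    finally show ?thesis by simp
  qed
  show ?thesis
    unfolding continuous_on_iff
  proof (intro ballI allI impI)
    fix x e :: real assume x: "x \<in> {0..1}" and e: "0 < e"
    show "\<exists>d>0. \<forall>x'\<in>{0..1}. dist x' x < d \<longrightarrow> dist (ic gs L x') (ic gs L x) < e"
    proof (cases "x < 1")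
      case True
      define n where "n = nat \<lceil>x/(1-x)\<rceil> + 1"
      have "x/(1-x) < real n" unfolding n_def by linarith
      hence xn: "x < psi n 0" using True by (simp add: psi_0 field_simps)
      have "x \<in> {0..psi n 0}" using x xn by auto
      then obtain d where d: "d > 0" "\<forall>x'\<in>{0..psi n 0}. dist x' x < d \<longrightarrow> dist (ic gs L x') (ic gs L x) < e"
        using init[of n] e unfolding continuous_on_iff by blast
      show ?thesis
      proof (rule exI[of _ "min d (psi n 0 - x)"], intro conjI ballI impI)
        show "0 < min d (psi n 0 - x)" using d xn by simp
        fix x' assume "x' \<in> {0..1}" "dist x' x < min d (psi n 0 - x)"
        hence "x' \<in> {0..psi n 0}" "dist x' x < d" by (auto simp: dist_real_def)
        thus "dist (ic gs L x') (ic gs L x) < e" using d by blast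
      qed
    next
      case False
      hence x1: "x = 1" using x by simp
      obtain n :: nat where n: "B / e < real n" using reals_Archimedean2 by blast
      have Bn: "B / (real n + 1) < e"
      proof -
        have "B < e * real n" using n e by (simp add: field_simps)
        also have "\<dots> \<le> e * (real n + 1)" using e by simp
        finally show ?thesis by (simp add: field_simps)
      qed
      show ?thesis
      proof (rule exI[of _ "1 - psi n 0"], intro conjI ballI impI)
        show "0 < 1 - psi n 0" using psi_range[of 0 n] by simp
        fix x' assume x': "x' \<in> {0..1}" "dist x' x < 1 - psi n 0"
        hence xg: "psi n 0 < x'" using x1 by (auto simp: dist_real_def)
        show "dist (ic gs L x') (ic gs L x) < e"
        proof (cases "x' = 1")
          case True thus ?thesis using x1 e by simp
        next
          case False
          hence x'1: "x' < 1" using x' by simp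
          define u where "u = x'/(1-x')"
          define m where "m = nat \<lfloor>u\<rfloor>"
          have "real n < u"
          proof -
            have "real n / (real n + 1) < x'" using xg psi_0 by simp
            hence "real n < x' * (real n + 1)" by (simp add: field_simps)
            thus ?thesis using x'1 by (simp add: u_def field_simps)
          qed
          hence mn: "n \<le> m" unfolding m_def by linarith
          have u0: "0 \<le> u" using x' x'1 by (simp add: u_def)
          have s01: "u - of_int \<lfloor>u\<rfloor> \<in> {0..1}" by auto linarith
          have "ic gs L x' = gs m (u - of_int \<lfloor>u\<rfloor>)"
            using x'1 by (simp add: ic_def u_def m_def)
          hence "\<bar>ic gs L x' - L\<bar> \<le> B / (real m + 1)" using bd[OF s01] by simp
          also have "\<dots> \<le> B / (real n + 1)" using mn B0 by (simp add: frac_le)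
          also have "\<dots> < e" by (fact Bn)
          finally show ?thesis using x1 by (simp add: ic_def dist_real_def)
        qed
      qed
    qed
  qed
qed



lemma card_A1: "i < (N::nat) \<Longrightarrow> {j\<in>{..<N}. j \<le> i \<and> i < j + d} = {i + 1 - d..i}"
  apply (rule set_eqI) apply simp apply arith done
lemma card_A2: "i < (N::nat) \<Longrightarrow> {j\<in>{..<N}. j + 1 < i \<and> i \<le> j + d} = {i - d..<i - 1}"
  apply (rule set_eqI) apply simp apply arith done
lemma card_B2: "i < (N::nat) \<Longrightarrow> {j\<in>{..<N}. j + 1 \<le> i \<and> i < j + d} = {i + 1 - d..<i}"
  apply (rule set_eqI) apply simp apply arith done
lemma card_H1: "{k\<in>{1..d-1}. (i::nat) < k} = {i+1..d-1}" apply (rule set_eqI) apply simp apply arith done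
lemma card_H2: "0 < (i::nat) \<Longrightarrow> {k\<in>{1..d-1}. 0 < i \<and> i \<le> k} = {i..d-1}" apply (rule set_eqI) apply simp apply arith done

lemma combA:
  assumes "d \<ge> 2" "i < (N::nat)"
  shows "card {j\<in>{..<N}. j \<le> i \<and> i < j + d} + card {j\<in>{..<N}. j + 1 < i \<and> i \<le> j + d}
       + card {k\<in>{1..d-1}. i < k} + card {k \<in> {1..d-1}. 0 < i \<and> i \<le> k}
     = (if i = 0 then d else 2*d - 1)"
proof (cases "i = 0")
  case True
  have "{k \<in> {1..d-1}. 0 < i \<and> i \<le> k} = {}" using True by auto
  thus ?thesis using assms True unfolding card_A1[OF assms(2)] card_A2[OF assms(2)] card_H1 by simp
next
  case False
  thus ?thesis using assms unfolding card_A1[OF assms(2)] card_A2[OF assms(2)] card_H1 card_H2[OF False[unfolded neq0_conv]] by simp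
qed

lemma combB:
  assumes "d \<ge> 2" "i < (N::nat)"
  shows "card {j\<in>{..<N}. j \<le> i \<and> i < j + d} + card {j\<in>{..<N}. j + 1 \<le> i \<and> i < j + d}
       + card {k\<in>{1..d-1}. i < k} + card {k \<in> {1..d-1}. i < k} = 2*d - 1"
  using assms unfolding card_A1[OF assms(2)] card_B2[OF assms(2)] card_H1 by simp



lemma prof_cong: "prof g P \<Longrightarrow> (\<And>y. P y = Q y) \<Longrightarrow> prof g Q"
  by (simp add: prof_def)

definition rng :: "(real \<Rightarrow> real) \<Rightarrow> real \<Rightarrow> real \<Rightarrow> bool" where
  "rng g a b \<longleftrightarrow> (\<forall>s\<in>{0..1}. a \<le> g s \<and> g s \<le> b)"

definition seg :: "real \<Rightarrow> real \<Rightarrow> real \<Rightarrow> real" where "seg a b = af a b (\<lambda>t. t)"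

lemma seg_0[simp]: "seg a b 0 = a" and seg_1[simp]: "seg a b 1 = b"
  by (simp_all add: seg_def af_def)

lemma cat_0[simp]: "cat g h 0 = g 0" and cat_1[simp]: "cat g h 1 = h 1"
  by (simp_all add: cat_def)

lemma ic_0[simp]: "ic gs L 0 = gs 0 0" and ic_1[simp]: "ic gs L 1 = L"
  by (simp_all add: ic_def)

lemma rv_0[simp]: "rv g 0 = g 1" and rv_1[simp]: "rv g 1 = g 0"
  by (simp_all add: rv_def)

lemma af_0[simp]: "af p q g 0 = p + (q - p) * g 0" and af_1[simp]: "af p q g 1 = p + (q - p) * g 1"
  by (simp_all add: af_def)

lemma cont_seg: "continuous_on {0..1} (seg a b)"
  unfolding seg_def by (intro cont_af continuous_intros)

lemma prof_seg_up:
  assumes "a < b" shows "prof (seg a b) (\<lambda>y. ind (a \<le> y \<and> y < b))"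
proof -
  have P: "prof (seg a b) (\<lambda>y. ind (0 \<le> (y - a)/(b - a) \<and> (y - a)/(b - a) < 1))"
    unfolding seg_def by (rule prof_af[OF prof_id]) (use assms in simp)
  have E:  "(0 \<le> (y - a)/(b - a) \<and> (y - a)/(b - a) < 1) = (a \<le> y \<and> y < b)" for y
  proof -
    have "0 < b - a" using assms by simp
    hence "(0 \<le> (y - a)/(b - a)) = (0 \<le> y - a)" "((y - a)/(b - a) < 1) = (y - a < b - a)"
      by (simp_all add: zero_le_divide_iff divide_less_eq)
    thus ?thesis by linarith
  qed
  show ?thesis by (rule prof_cong[OF P]) (simp add: E)
qed

lemma prof_seg_down:
  assumes "b < a" shows "prof (seg a b) (\<lambda>y. ind (b < y \<and> y \<le> a))"
proof -
  have P: "prof (seg a b) (\<lambda>y. ind (0 \<le> (y - a)/(b - a) \<and> (y - a)/(b - a) < 1))"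
    unfolding seg_def by (rule prof_af[OF prof_id]) (use assms in simp)
  have E:  "(0 \<le> (y - a)/(b - a) \<and> (y - a)/(b - a) < 1) = (b < y \<and> y \<le> a)" for y
  proof -
    have e: "(y - a)/(b - a) = (a - y)/(a - b)" by (simp add: divide_simps) (simp add: algebra_simps)
    have "0 < a - b" using assms by simp
    hence "(0 \<le> (a - y)/(a - b)) = (0 \<le> a - y)" "((a - y)/(a - b) < 1) = (a - y < a - b)"
      by (simp_all add: zero_le_divide_iff divide_less_eq)
    thus ?thesis unfolding e by linarith
  qed
  show ?thesis by (rule prof_cong[OF P]) (simp add: E)
qed

lemma rng_id: "rng (\<lambda>t. t) 0 1" by (simp add: rng_def)

lemma rng_cat: assumes "rng g a b" "rng h a b" shows "rng (cat g h) a b"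
  unfolding rng_def
proof
  fix t :: real assume t: "t \<in> {0..1}"
  show "a \<le> cat g h t \<and> cat g h t \<le> b"
  proof (cases "t \<le> 1/2")
    case True
    hence "2*t \<in> {0..1}" using t by auto
    thus ?thesis using assms(1) True unfolding rng_def cat_def by simp
  next
    case False
    hence "2*t - 1 \<in> {0..1}" using t by auto
    thus ?thesis using assms(2) False unfolding rng_def cat_def by simp
  qed
qed

lemma rng_mono: "rng g a b \<Longrightarrow> a' \<le> a \<Longrightarrow> b \<le> b' \<Longrightarrow> rng g a' b'"
  by (force simp: rng_def)

lemma rng_ic:
  assumes "\<And>n. rng (gs n) a b" "a \<le> L" "L \<le> b"
  shows "rng (ic gs L) a b"
  unfolding rng_def
proof
  fix t :: real assume t: "t \<in> {0..1}"
  show "a \<le> ic gs L t \<and> ic gs L t \<le> b"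
  proof (cases "t < 1")
    case True
    define u where "u = t/(1-t)"
    have "0 \<le> u - of_int \<lfloor>u\<rfloor>" "u - of_int \<lfloor>u\<rfloor> \<le> 1" by linarith+
    hence "u - of_int \<lfloor>u\<rfloor> \<in> {0..1}" by simp
    thus ?thesis using assms(1) True unfolding rng_def by (simp add: ic_def u_def)
  next
    case False thus ?thesis using assms by (simp add: ic_def)
  qed
qed

lemma rng_af: assumes "rng g 0 1" "p \<le> q" shows "rng (af p q g) p q"
  unfolding rng_def af_def
proof
  fix s :: real assume "s \<in> {0..1}"
  hence g: "0 \<le> g s" "g s \<le> 1" using assms(1) by (auto simp: rng_def)
  have "0 \<le> (q - p) * g s" using g assms(2) by simp
  moreover have "(q - p) * g s \<le> (q - p)" by (rule mult_left_le) (use g assms(2) in simp_all)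
  ultimately show "p \<le> p + (q - p) * g s \<and> p + (q - p) * g s \<le> q" by simp
qed

lemma rng_af2: assumes "rng g 0 1" "q \<le> p" shows "rng (af p q g) q p"
  unfolding rng_def af_def
proof
  fix s :: real assume "s \<in> {0..1}"
  hence g: "0 \<le> g s" "g s \<le> 1" using assms(1) by (auto simp: rng_def)
  have "0 \<le> (p - q) * g s" using g assms(2) by simp
  moreover have "(p - q) * g s \<le> (p - q)" by (rule mult_left_le) (use g assms(2) in simp_all)
  ultimately show "q \<le> p + (q - p) * g s \<and> p + (q - p) * g s \<le> p" by (simp add: algebra_simps)
qed

lemma rng_seg: "a \<le> b \<Longrightarrow> rng (seg a b) a b" "b \<le> a \<Longrightarrow> rng (seg a b) b a"
  unfolding seg_def by (auto intro: rng_af rng_af2 rng_id)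

lemma rng_rv: "rng g a b \<Longrightarrow> rng (rv g) a b"
  by (auto simp: rng_def rv_def)



definition Lj :: "nat \<Rightarrow> real" where "Lj j = real j / (real j + 1)"

lemma Lj_less_iff[simp]: "Lj a < Lj b \<longleftrightarrow> a < b"
  by (simp add: Lj_def divide_simps algebra_simps)
lemma Lj_le_iff[simp]: "Lj a \<le> Lj b \<longleftrightarrow> a \<le> b"
  by (simp add: Lj_def divide_simps algebra_simps)
lemma Lj_eq_iff[simp]: "Lj a = Lj b \<longleftrightarrow> a = b"
  by (metis Lj_le_iff order_antisym order_refl)
lemma Lj_ge0[simp]: "0 \<le> Lj a" by (simp add: Lj_def)
lemma Lj_lt1[simp]: "Lj a < 1" by (simp add: Lj_def)
lemma Lj_0[simp]: "Lj 0 = 0" by (simp add: Lj_def)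
lemma Lj_pos[simp]: "0 < Lj a \<longleftrightarrow> 0 < a" by (simp add: Lj_def zero_less_divide_iff)
lemma Lj_eq_0[simp]: "Lj a = 0 \<longleftrightarrow> a = 0" by (simp add: Lj_def)
lemma Lj_1m: "1 - Lj a = 1 / (real a + 1)" by (simp add: Lj_def divide_simps)

lemma Lj_le_y: assumes "y < 1" shows "Lj n \<le> y \<longleftrightarrow> real n \<le> y/(1-y)"
  using assms by (simp add: Lj_def divide_simps algebra_simps)

lemma Lj_locate:
  assumes "0 \<le> y" "y < 1"
  shows "Lj (nat \<lfloor>y/(1-y)\<rfloor>) \<le> y" "y < Lj (Suc (nat \<lfloor>y/(1-y)\<rfloor>))"
proof -
  have u0: "0 \<le> y/(1-y)" using assms by simp
  show "Lj (nat \<lfloor>y/(1-y)\<rfloor>) \<le> y" using assms u0 by (simp add: Lj_le_y)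
  have "\<not> Lj (Suc (nat \<lfloor>y/(1-y)\<rfloor>)) \<le> y" using assms u0 by (simp add: Lj_le_y) linarith
  thus "y < Lj (Suc (nat \<lfloor>y/(1-y)\<rfloor>))" by simp
qed

lemma Lj_floor: "nat \<lfloor>Lj i / (1 - Lj i)\<rfloor> = i"
proof -
  have "Lj i / (1 - Lj i) = real i" by (simp add: Lj_def divide_simps)
  thus ?thesis by simp
qed

definition hump :: "real \<Rightarrow> real \<Rightarrow> real \<Rightarrow> real" where "hump a h = cat (seg a h) (seg h a)"

lemma hump_0[simp]: "hump a h 0 = a" and hump_1[simp]: "hump a h 1 = a"
  by (simp_all add: hump_def)

lemma prof_hump: assumes "a < h"
  shows "prof (hump a h) (\<lambda>y. ind (a \<le> y \<and> y < h) + ind (a < y \<and> y \<le> h))"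
  unfolding hump_def by (rule prof_cat[OF prof_seg_up[OF assms] prof_seg_down[OF assms]]) simp

lemma cont_hump: "continuous_on {0..1} (hump a h)"
  unfolding hump_def by (intro cont_cat cont_seg) simp

lemma rng_hump: "a \<le> h \<Longrightarrow> rng (hump a h) a h"
  unfolding hump_def by (intro rng_cat rng_seg)

definition tooth :: "nat \<Rightarrow> nat \<Rightarrow> real \<Rightarrow> real" where
  "tooth d j = cat (seg (Lj j) (Lj (j+d))) (seg (Lj (j+d)) (Lj (Suc j)))"

definition PT :: "nat \<Rightarrow> nat \<Rightarrow> real \<Rightarrow> nat" where
  "PT d j y = ind (Lj j \<le> y \<and> y < Lj (j+d)) + ind (Lj (Suc j) < y \<and> y \<le> Lj (j+d))"

lemma prof_tooth: assumes "d \<ge> 2" shows "prof (tooth d j) (PT d j)"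
proof -
  have a: "Lj j < Lj (j+d)" "Lj (Suc j) < Lj (j+d)" using assms by simp_all
  show ?thesis unfolding tooth_def PT_def
    by (rule prof_cat[OF prof_seg_up[OF a(1)] prof_seg_down[OF a(2)]]) simp
qed

lemma tooth_0[simp]: "tooth d j 0 = Lj j" and tooth_1[simp]: "tooth d j 1 = Lj (Suc j)"
  by (simp_all add: tooth_def)

lemma cont_tooth: "continuous_on {0..1} (tooth d j)"
  unfolding tooth_def by (intro cont_cat cont_seg) simp

lemma rng_tooth: assumes "d \<ge> 1" shows "rng (tooth d j) (Lj j) 1"
proof -
  have "rng (seg (Lj j) (Lj (j+d))) (Lj j) (Lj (j+d))" by (rule rng_seg) simp
  hence r1: "rng (seg (Lj j) (Lj (j+d))) (Lj j) 1" by (rule rng_mono) (simp_all add: less_imp_le)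
  have "rng (seg (Lj (j+d)) (Lj (Suc j))) (Lj (Suc j)) (Lj (j+d))" by (rule rng_seg) (use assms in simp)
  hence r2: "rng (seg (Lj (j+d)) (Lj (Suc j))) (Lj j) 1" by (rule rng_mono) (simp_all add: less_imp_le)
  show ?thesis unfolding tooth_def by (rule rng_cat[OF r1 r2])
qed

definition W :: "nat \<Rightarrow> real \<Rightarrow> real" where "W d = ic (tooth d) 1"

definition NW :: "real \<Rightarrow> nat" where
  "NW y = (if 0 \<le> y \<and> y < 1 then Suc (nat \<lfloor>y/(1-y)\<rfloor>) else 0)"

lemma PT_zero: assumes "NW y \<le> n" shows "PT d n y = 0"
proof (cases "0 \<le> y \<and> y < 1")
  case True
  hence "real n > y/(1-y)" using assms by (simp add: NW_def) linarith
  hence "\<not> Lj n \<le> y" using True by (simp add: Lj_le_y)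
  moreover have "Lj n \<le> Lj (Suc n)" by simp
  ultimately have "\<not> Lj (Suc n) < y" by linarith
  thus ?thesis using \<open>\<not> Lj n \<le> y\<close> by (auto simp: PT_def ind_def)
next
  case False
  have a: "0 \<le> Lj n" "0 \<le> Lj (Suc n)" "Lj (n+d) < 1" by simp_all
  have "\<not> (Lj n \<le> y \<and> y < Lj (n+d))" "\<not> (Lj (Suc n) < y \<and> y \<le> Lj (n+d))"
    using False a by linarith+
  thus ?thesis by (simp add: PT_def ind_def)
qed

lemma prof_W: assumes "d \<ge> 2" shows "prof (W d) (\<lambda>y. \<Sum>j<NW y. PT d j y)"
  unfolding W_def by (rule prof_ic[OF prof_tooth[OF assms] PT_zero])

lemma cont_W: assumes "d \<ge> 1" shows "continuous_on {0..1} (W d)"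
  unfolding W_def
proof (rule cont_ic[where B=1])
  show "continuous_on {0..1} (tooth d n)" for n by (rule cont_tooth)
  show "tooth d n 1 = tooth d (Suc n) 0" for n by simp
  fix n s assume s: "(s::real) \<in> {0..1}"
  have "Lj n \<le> tooth d n s" "tooth d n s \<le> 1" using rng_tooth[OF assms, of n] s by (auto simp: rng_def)
  thus "\<bar>tooth d n s - 1\<bar> \<le> 1 / (real n + 1)" using Lj_1m[of n] by simp
qed

lemma rng_W: assumes "d \<ge> 1" shows "rng (W d) 0 1"
  unfolding W_def by (rule rng_ic) (auto intro: rng_mono[OF rng_tooth[OF assms]])

lemma W_0[simp]: "W d 0 = 0" and W_1[simp]: "W d 1 = 1" by (simp_all add: W_def)

fun ihumps :: "nat \<Rightarrow> (real \<Rightarrow> real) \<Rightarrow> real \<Rightarrow> real" where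
  "ihumps 0 g = g"
| "ihumps (Suc k) g = cat (hump 0 (Lj (Suc k))) (ihumps k g)"

lemma ihumps_0: "g 0 = 0 \<Longrightarrow> ihumps k g 0 = 0" by (induction k) simp_all
lemma ihumps_1: "ihumps k g 1 = g 1" by (induction k) simp_all

lemma prof_ihumps:
  assumes "prof g P" "g 0 = 0"
  shows "prof (ihumps k g) (\<lambda>y. P y + (\<Sum>i\<in>{1..k}. ind (0 \<le> y \<and> y < Lj i) + ind (0 < y \<and> y \<le> Lj i)))"
proof (induction k)
  case 0 thus ?case using assms by simp
next
  case (Suc k)
  have h: "prof (hump 0 (Lj (Suc k))) (\<lambda>y. ind (0 \<le> y \<and> y < Lj (Suc k)) + ind (0 < y \<and> y \<le> Lj (Suc k)))"
    by (rule prof_hump) simp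
  have "prof (ihumps (Suc k) g) (\<lambda>y. (ind (0 \<le> y \<and> y < Lj (Suc k)) + ind (0 < y \<and> y \<le> Lj (Suc k)))
        + (P y + (\<Sum>i\<in>{1..k}. ind (0 \<le> y \<and> y < Lj i) + ind (0 < y \<and> y \<le> Lj i))))"
    unfolding ihumps.simps by (rule prof_cat[OF h Suc], simp add: ihumps_0[of g, OF assms(2)])
  thus ?case by (rule prof_cong) simp
qed

lemma cont_ihumps: "continuous_on {0..1} g \<Longrightarrow> g 0 = 0 \<Longrightarrow> continuous_on {0..1} (ihumps k g)"
  by (induction k) (auto intro!: cont_cat cont_hump simp: ihumps_0)

lemma rng_ihumps: "rng g 0 1 \<Longrightarrow> rng (ihumps k g) 0 1"
proof (induction k)
  case 0 thus ?case by simp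
next
  case (Suc k)
  have "rng (hump 0 (Lj (Suc k))) 0 1" by (rule rng_mono[OF rng_hump]) (simp_all add: less_imp_le)
  thus ?case using Suc by (simp add: rng_cat)
qed



lemma sum_ind: "finite A \<Longrightarrow> (\<Sum>x\<in>A. ind (P x)) = card {x\<in>A. P x}"
  by (simp add: ind_def sum.If_cases Int_def conj_commute)

definition Cstd :: "nat \<Rightarrow> real \<Rightarrow> real" where
  "Cstd d = (if d \<le> 1 then seg 0 1 else ihumps (d - 1) (W d))"

definition PC :: "nat \<Rightarrow> real \<Rightarrow> nat" where
  "PC d y = d * ind (y = 0) + (2*d - 1) * ind (0 < y \<and> y < 1)"

lemma between_iffs:
  assumes "Lj i < y" "y < Lj (Suc i)"
  shows "Lj m \<le> y \<longleftrightarrow> m \<le> i" "y < Lj m \<longleftrightarrow> i < m" "Lj m < y \<longleftrightarrow> m \<le> i" "y \<le> Lj m \<longleftrightarrow> i < m"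
proof -
  have A: "Lj m \<le> y \<longleftrightarrow> m \<le> i"
  proof
    assume "Lj m \<le> y"
    hence "Lj m < Lj (Suc i)" using assms by linarith
    thus "m \<le> i" by simp
  next
    assume "m \<le> i" hence "Lj m \<le> Lj i" by simp
    thus "Lj m \<le> y" using assms by linarith
  qed
  have B: "Lj m < y \<longleftrightarrow> m \<le> i"
  proof
    assume "Lj m < y"
    hence "Lj m < Lj (Suc i)" using assms by linarith
    thus "m \<le> i" by simp
  next
    assume "m \<le> i" hence "Lj m \<le> Lj i" by simp
    thus "Lj m < y" using assms by linarith
  qed
  show "Lj m \<le> y \<longleftrightarrow> m \<le> i" by (fact A)
  show "Lj m < y \<longleftrightarrow> m \<le> i" by (fact B)
  show "y < Lj m \<longleftrightarrow> i < m" using A by (simp add: not_le[symmetric])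
  show "y \<le> Lj m \<longleftrightarrow> i < m" using B by (simp add: not_less[symmetric])
qed

lemma PC_main:
  assumes d: "d \<ge> 2"
  shows "(\<Sum>j<NW y. PT d j y) + (\<Sum>i\<in>{1..d - 1}. ind (0 \<le> y \<and> y < Lj i) + ind (0 < y \<and> y \<le> Lj i))
         = PC d y"
proof -
  have S: "(\<Sum>j<N. PT d j y) = card {j\<in>{..<N}. Lj j \<le> y \<and> y < Lj (j+d)}
             + card {j\<in>{..<N}. Lj (Suc j) < y \<and> y \<le> Lj (j+d)}" for N
    by (simp add: PT_def sum.distrib sum_ind)
  have H: "(\<Sum>i\<in>{1..d - 1}. ind (0 \<le> y \<and> y < Lj i) + ind (0 < y \<and> y \<le> Lj i))
       = card {i\<in>{1..d-1}. 0 \<le> y \<and> y < Lj i} + card {i\<in>{1..d-1}. 0 < y \<and> y \<le> Lj i}"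
    by (simp add: sum.distrib sum_ind)
  show ?thesis
  proof (cases "0 \<le> y \<and> y < 1")
    case False
    hence N0: "NW y = 0" by (simp add: NW_def)
    have a: "\<not> (0 \<le> y \<and> y < Lj i)" "\<not> (0 < y \<and> y \<le> Lj i)" for i
      using False Lj_lt1[of i] by linarith+
    have "{i\<in>{1..d-1}. 0 \<le> y \<and> y < Lj i} = {}" "{i\<in>{1..d-1}. 0 < y \<and> y \<le> Lj i} = {}"
      using a by auto
    moreover have "PC d y = 0" using False by (auto simp: PC_def ind_def)
    ultimately show ?thesis unfolding H N0 by simp
  next
    case True
    define i where "i = nat \<lfloor>y/(1-y)\<rfloor>"
    have N: "NW y = Suc i" using True by (simp add: NW_def i_def)
    have loc: "Lj i \<le> y" "y < Lj (Suc i)" using Lj_locate[of y] True by (simp_all add: i_def)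
    show ?thesis
    proof (cases "y = Lj i")
      case True
      have e1: "{j\<in>{..<Suc i}. Lj j \<le> y \<and> y < Lj (j+d)} = {j\<in>{..<Suc i}. j \<le> i \<and> i < j + d}"
        "{j\<in>{..<Suc i}. Lj (Suc j) < y \<and> y \<le> Lj (j+d)} = {j\<in>{..<Suc i}. j + 1 < i \<and> i \<le> j + d}"
        "{k\<in>{1..d-1}. 0 \<le> y \<and> y < Lj k} = {k\<in>{1..d-1}. i < k}"
        "{k\<in>{1..d-1}. 0 < y \<and> y \<le> Lj k} = {k\<in>{1..d-1}. 0 < i \<and> i \<le> k}"
        using True by auto
      have "PC d y = (if i = 0 then d else 2*d - 1)" using True by (auto simp: PC_def ind_def)
      thus ?thesis unfolding S H N e1 using combA[OF d, of i "Suc i"] by simp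
    next
      case False
      hence lt: "Lj i < y" using loc by simp
      note bi = between_iffs[OF lt loc(2)]
      have y0: "0 < y" using lt Lj_ge0[of i] by linarith
      have e1: "{j\<in>{..<Suc i}. Lj j \<le> y \<and> y < Lj (j+d)} = {j\<in>{..<Suc i}. j \<le> i \<and> i < j + d}"
        "{j\<in>{..<Suc i}. Lj (Suc j) < y \<and> y \<le> Lj (j+d)} = {j\<in>{..<Suc i}. j + 1 \<le> i \<and> i < j + d}"
        "{k\<in>{1..d-1}. 0 \<le> y \<and> y < Lj k} = {k\<in>{1..d-1}. i < k}"
        "{k\<in>{1..d-1}. 0 < y \<and> y \<le> Lj k} = {k\<in>{1..d-1}. i < k}"
        using y0 by (auto simp: bi)
      have y1: "y < 1" using loc(2) Lj_lt1[of "Suc i"] by linarith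
      have "PC d y = 2*d - 1" using y0 y1 by (auto simp: PC_def ind_def)
      thus ?thesis unfolding S H N e1 using combB[OF d, of i "Suc i"] by simp
    qed
  qed
qed

lemma prof_Cstd: assumes "d \<ge> 1" shows "prof (Cstd d) (PC d)"
proof (cases "d \<le> 1")
  case True
  hence d1: "d = 1" using assms by simp
  have p: "prof (seg 0 1) (\<lambda>y. ind (0 \<le> y \<and> y < 1))" by (rule prof_seg_up) simp
  have eq: "ind (0 \<le> y \<and> y < 1) = PC d y" for y by (auto simp: PC_def ind_def d1)
  show ?thesis unfolding Cstd_def using d1 prof_cong[OF p eq] by simp
next
  case False
  hence d2: "d \<ge> 2" by simp
  have p: "prof (ihumps (d - 1) (W d)) (\<lambda>y. (\<Sum>j<NW y. PT d j y) + (\<Sum>i\<in>{1..d - 1}. ind (0 \<le> y \<and> y < Lj i) + ind (0 < y \<and> y \<le> Lj i)))"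
    by (rule prof_ihumps[OF prof_W[OF d2]]) simp
  show ?thesis unfolding Cstd_def using False prof_cong[OF p PC_main[OF d2]] by simp
qed

lemma Cstd_0[simp]: "Cstd d 0 = 0" and Cstd_1[simp]: "Cstd d 1 = 1"
  by (simp_all add: Cstd_def ihumps_0 ihumps_1)

lemma cont_Cstd: "d \<ge> 1 \<Longrightarrow> continuous_on {0..1} (Cstd d)"
  by (auto simp: Cstd_def intro!: cont_seg cont_ihumps cont_W)

lemma rng_Cstd: "d \<ge> 1 \<Longrightarrow> rng (Cstd d) 0 1"
  by (auto simp: Cstd_def intro!: rng_ihumps rng_W rng_seg)



definition Cc :: "nat \<Rightarrow> real \<Rightarrow> real \<Rightarrow> real \<Rightarrow> real" where "Cc d c b = af c b (Cstd d)"
definition Cp :: "nat \<Rightarrow> real \<Rightarrow> real \<Rightarrow> real \<Rightarrow> real" where "Cp d a c = rv (af c a (Cstd d))"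

lemma Cc_0[simp]: "Cc d c b 0 = c" and Cc_1[simp]: "Cc d c b 1 = b"
  by (simp_all add: Cc_def)
lemma Cp_0[simp]: "Cp d a c 0 = a" and Cp_1[simp]: "Cp d a c 1 = c"
  by (simp_all add: Cp_def)

lemma prof_Cc: assumes "d \<ge> 1" "c < b"
  shows "prof (Cc d c b) (\<lambda>y. d * ind (y = c) + (2*d - 1) * ind (c < y \<and> y < b))"
proof -
  have p: "prof (Cc d c b) (\<lambda>y. PC d ((y - c)/(b - c)))"
    unfolding Cc_def by (rule prof_af[OF prof_Cstd[OF assms(1)]]) (use assms in simp)
  have e: "PC d ((y - c)/(b - c)) = d * ind (y = c) + (2*d - 1) * ind (c < y \<and> y < b)" for y
  proof -
    have bc: "0 < b - c" using assms by simp
    have "((y - c)/(b - c) = 0) = (y = c)" using bc by simp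
    moreover have "(0 < (y - c)/(b - c)) = (c < y)" using bc by (simp add: zero_less_divide_iff)
    moreover have "((y - c)/(b - c) < 1) = (y < b)" using bc by (simp add: divide_less_eq)
    ultimately show ?thesis by (simp add: PC_def)
  qed
  show ?thesis by (rule prof_cong[OF p], rule e)
qed

lemma prof_Cp: assumes "d \<ge> 1" "a < c"
  shows "prof (Cp d a c) (\<lambda>y. (d - 1) * ind (y = c) + (2*d - 1) * ind (a < y \<and> y < c) + ind (y = a))"
proof -
  have p0: "prof (af c a (Cstd d)) (\<lambda>y. PC d ((y - c)/(a - c)))"
    by (rule prof_af[OF prof_Cstd[OF assms(1)]]) (use assms in simp)
  have p: "prof (Cp d a c) (\<lambda>y. PC d ((y - c)/(a - c)) + ind (a = y) - ind (c = y))"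
    unfolding Cp_def using prof_rv[OF p0] by simp
  have e: "PC d ((y - c)/(a - c)) + ind (a = y) - ind (c = y)
        = (d - 1) * ind (y = c) + (2*d - 1) * ind (a < y \<and> y < c) + ind (y = a)" for y
  proof -
    have ac: "a - c < 0" using assms by simp
    have e: "(y - c)/(a - c) = (c - y)/(c - a)" by (simp add: divide_simps) (simp add: algebra_simps)
    have ca: "0 < c - a" using assms by simp
    have "((y - c)/(a - c) = 0) = (y = c)" using ac by simp
    moreover have "(0 < (y - c)/(a - c)) = (y < c)" unfolding e using ca by (simp add: zero_less_divide_iff)
    moreover have "((y - c)/(a - c) < 1) = (a < y)" unfolding e using ca by (simp add: divide_less_eq)
    ultimately show ?thesis using assms by (auto simp: PC_def ind_def)
  qed
  show ?thesis by (rule prof_cong[OF p], rule e)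
qed

lemma cont_Cc: "d \<ge> 1 \<Longrightarrow> continuous_on {0..1} (Cc d c b)"
  unfolding Cc_def by (intro cont_af cont_Cstd)
lemma cont_Cp: "d \<ge> 1 \<Longrightarrow> continuous_on {0..1} (Cp d a c)"
  unfolding Cp_def by (intro cont_rv cont_af cont_Cstd)
lemma rng_Cc: "d \<ge> 1 \<Longrightarrow> c \<le> b \<Longrightarrow> rng (Cc d c b) c b"
  unfolding Cc_def by (intro rng_af rng_Cstd)
lemma rng_Cp: "d \<ge> 1 \<Longrightarrow> a \<le> c \<Longrightarrow> rng (Cp d a c) a c"
  unfolding Cp_def by (intro rng_rv rng_af2 rng_Cstd)

fun hcat :: "nat \<Rightarrow> (real \<Rightarrow> real) \<Rightarrow> (real \<Rightarrow> real) \<Rightarrow> real \<Rightarrow> real" where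
  "hcat 0 h g = g"
| "hcat (Suc j) h g = cat h (hcat j h g)"

lemma hcat_0: "h 0 = g 0 \<Longrightarrow> hcat j h g 0 = g 0" by (cases j) simp_all
lemma hcat_1: "h 1 = g 0 \<Longrightarrow> h 0 = g 0 \<Longrightarrow> hcat j h g 1 = g 1" by (induction j) simp_all

lemma prof_hcat:
  assumes "prof h Ph" "prof g Pg" "h 0 = g 0" "h 1 = g 0"
  shows "prof (hcat j h g) (\<lambda>y. j * Ph y + Pg y)"
proof (induction j)
  case 0 thus ?case using assms by simp
next
  case (Suc j)
  have "prof (hcat (Suc j) h g) (\<lambda>y. Ph y + (j * Ph y + Pg y))"
    unfolding hcat.simps by (rule prof_cat[OF assms(1) Suc]) (simp add: hcat_0 assms)
  thus ?case by (rule prof_cong) simp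
qed

lemma cont_hcat: "continuous_on {0..1} h \<Longrightarrow> continuous_on {0..1} g \<Longrightarrow> h 0 = g 0 \<Longrightarrow> h 1 = g 0
   \<Longrightarrow> continuous_on {0..1} (hcat j h g)"
  by (induction j) (auto intro!: cont_cat simp: hcat_0)

lemma rng_hcat: "rng h a b \<Longrightarrow> rng g a b \<Longrightarrow> rng (hcat j h g) a b"
  by (induction j) (auto intro!: rng_cat)

definition unitf :: "real \<Rightarrow> real \<Rightarrow> real \<Rightarrow> nat \<Rightarrow> nat \<Rightarrow> nat \<Rightarrow> real \<Rightarrow> real" where
  "unitf a c b D jr jl = cat (hcat jr (hump a c) (Cp (D - jr) a c)) (hcat jl (hump c b) (Cc (D - jl) c b))"

definition Punit :: "real \<Rightarrow> real \<Rightarrow> nat \<Rightarrow> nat \<Rightarrow> nat \<Rightarrow> real \<Rightarrow> nat" where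
  "Punit a b D jr jl y = (jr + 1) * ind (y = a) + (2*D - 1) * ind (a < y \<and> y < b) + jl * ind (y = b)"

lemma unitf_0[simp]: "unitf a c b D jr jl 0 = a"
  by (simp add: unitf_def hcat_0)
lemma unitf_1[simp]: "unitf a c b D jr jl 1 = b"
  by (simp add: unitf_def hcat_1)

lemma prof_unit:
  assumes "a < c" "c < b" "jr < D" "jl < D"
  shows "prof (unitf a c b D jr jl) (Punit a b D jr jl)"
proof -
  have p1: "prof (hcat jr (hump a c) (Cp (D - jr) a c))
     (\<lambda>y. jr * (ind (a \<le> y \<and> y < c) + ind (a < y \<and> y \<le> c)) +
          ((D - jr - 1) * ind (y = c) + (2*(D - jr) - 1) * ind (a < y \<and> y < c) + ind (y = a)))"
    by (rule prof_hcat[OF prof_hump[OF assms(1)] prof_Cp]) (use assms in simp_all)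
  have p2: "prof (hcat jl (hump c b) (Cc (D - jl) c b))
     (\<lambda>y. jl * (ind (c \<le> y \<and> y < b) + ind (c < y \<and> y \<le> b)) +
          ((D - jl) * ind (y = c) + (2*(D - jl) - 1) * ind (c < y \<and> y < b)))"
    by (rule prof_hcat[OF prof_hump[OF assms(2)] prof_Cc]) (use assms in simp_all)
  have p: "prof (unitf a c b D jr jl) (\<lambda>y.
      (jr * (ind (a \<le> y \<and> y < c) + ind (a < y \<and> y \<le> c)) +
          ((D - jr - 1) * ind (y = c) + (2*(D - jr) - 1) * ind (a < y \<and> y < c) + ind (y = a)))
    + (jl * (ind (c \<le> y \<and> y < b) + ind (c < y \<and> y \<le> b)) +
          ((D - jl) * ind (y = c) + (2*(D - jl) - 1) * ind (c < y \<and> y < b))))"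
    unfolding unitf_def by (rule prof_cat[OF p1 p2]) (simp add: hcat_0 hcat_1)
  show ?thesis
  proof (rule prof_cong[OF p])
    fix y
    consider "y < a" | "y = a" | "a < y \<and> y < c" | "y = c" | "c < y \<and> y < b" | "y = b" | "b < y"
      by linarith
    thus "(jr * (ind (a \<le> y \<and> y < c) + ind (a < y \<and> y \<le> c)) +
          ((D - jr - 1) * ind (y = c) + (2*(D - jr) - 1) * ind (a < y \<and> y < c) + ind (y = a)))
    + (jl * (ind (c \<le> y \<and> y < b) + ind (c < y \<and> y \<le> b)) +
          ((D - jl) * ind (y = c) + (2*(D - jl) - 1) * ind (c < y \<and> y < b)))
       = Punit a b D jr jl y"
      using assms by cases (auto simp: Punit_def ind_def)
  qed
qed

lemma cont_unit: assumes "jr < D" "jl < D" shows "continuous_on {0..1} (unitf a c b D jr jl)"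
  unfolding unitf_def using assms
  by (intro cont_cat cont_hcat cont_hump cont_Cp cont_Cc) (simp_all add: hcat_0 hcat_1)

lemma rng_unit: assumes "a \<le> c" "c \<le> b" "jr < D" "jl < D" shows "rng (unitf a c b D jr jl) a b"
proof -
  have "rng (hcat jr (hump a c) (Cp (D - jr) a c)) a c"
    using assms by (intro rng_hcat rng_hump rng_Cp) simp_all
  hence r1: "rng (hcat jr (hump a c) (Cp (D - jr) a c)) a b" by (rule rng_mono) (use assms in simp_all)
  have "rng (hcat jl (hump c b) (Cc (D - jl) c b)) c b"
    using assms by (intro rng_hcat rng_hump rng_Cc) simp_all
  hence r2: "rng (hcat jl (hump c b) (Cc (D - jl) c b)) a b" by (rule rng_mono) (use assms in simp_all)
  show ?thesis unfolding unitf_def by (rule rng_cat[OF r1 r2])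
qed



definition mid :: "nat \<Rightarrow> real" where "mid k = (Lj k + Lj (Suc k))/2"

definition Ufun :: "(nat \<Rightarrow> nat) \<Rightarrow> (nat \<Rightarrow> nat) \<Rightarrow> (nat \<Rightarrow> nat) \<Rightarrow> real \<Rightarrow> real" where
  "Ufun D jr jl = ic (\<lambda>k. unitf (Lj k) (mid k) (Lj (Suc k)) (D k) (jr k) (jl k)) 1"

definition PU :: "(nat \<Rightarrow> nat) \<Rightarrow> (nat \<Rightarrow> nat) \<Rightarrow> (nat \<Rightarrow> nat) \<Rightarrow> real \<Rightarrow> nat" where
  "PU D jr jl y = (\<Sum>k<NW y. Punit (Lj k) (Lj (Suc k)) (D k) (jr k) (jl k) y)"

lemma mid_bounds: "Lj k < mid k" "mid k < Lj (Suc k)"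
  using Lj_less_iff[of k "Suc k"] by (simp_all add: mid_def)

lemma Punit_zero: assumes "NW y \<le> k" shows "Punit (Lj k) (Lj (Suc k)) D jr jl y = 0"
proof (cases "0 \<le> y \<and> y < 1")
  case True
  hence "real k > y/(1-y)" using assms by (simp add: NW_def) linarith
  hence "\<not> Lj k \<le> y" using True by (simp add: Lj_le_y)
  moreover have "Lj k \<le> Lj (Suc k)" by simp
  ultimately show ?thesis by (auto simp: Punit_def ind_def)
next
  case False
  have a: "Lj k \<ge> 0" "Lj (Suc k) < 1" "Lj k < Lj (Suc k)" by simp_all
  have "y \<noteq> Lj k" "\<not> (Lj k < y \<and> y < Lj (Suc k))" "y \<noteq> Lj (Suc k)" using False a by linarith+
  thus ?thesis unfolding Punit_def ind_def by presburger
qed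

lemma prof_U:
  assumes "\<And>k. jr k < D k" "\<And>k. jl k < D k"
  shows "prof (Ufun D jr jl) (PU D jr jl)"
  unfolding Ufun_def PU_def
  by (rule prof_ic[OF prof_unit[OF mid_bounds assms] Punit_zero])

lemma cont_U:
  assumes "\<And>k. jr k < D k" "\<And>k. jl k < D k"
  shows "continuous_on {0..1} (Ufun D jr jl)"
  unfolding Ufun_def
proof (rule cont_ic[where B=1])
  show "continuous_on {0..1} (unitf (Lj n) (mid n) (Lj (Suc n)) (D n) (jr n) (jl n))" for n
    by (rule cont_unit[OF assms])
  show "unitf (Lj n) (mid n) (Lj (Suc n)) (D n) (jr n) (jl n) 1
      = unitf (Lj (Suc n)) (mid (Suc n)) (Lj (Suc (Suc n))) (D (Suc n)) (jr (Suc n)) (jl (Suc n)) 0" for n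
    by simp
  fix n s assume s: "(s::real) \<in> {0..1}"
  have r: "rng (unitf (Lj n) (mid n) (Lj (Suc n)) (D n) (jr n) (jl n)) (Lj n) (Lj (Suc n))"
    using mid_bounds[of n] assms by (intro rng_unit) simp_all
  have i: "Lj n \<le> unitf (Lj n) (mid n) (Lj (Suc n)) (D n) (jr n) (jl n) s"
       "unitf (Lj n) (mid n) (Lj (Suc n)) (D n) (jr n) (jl n) s \<le> Lj (Suc n)"
    using r s by (auto simp: rng_def)
  have "Lj n \<le> unitf (Lj n) (mid n) (Lj (Suc n)) (D n) (jr n) (jl n) s"
       "unitf (Lj n) (mid n) (Lj (Suc n)) (D n) (jr n) (jl n) s \<le> 1"
    using i Lj_lt1[of "Suc n"] by linarith+
  thus "\<bar>unitf (Lj n) (mid n) (Lj (Suc n)) (D n) (jr n) (jl n) s - 1\<bar> \<le> 1 / (real n + 1)"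
    using Lj_1m[of n] by simp
qed

lemma U_0[simp]: "Ufun D jr jl 0 = 0" and U_1[simp]: "Ufun D jr jl 1 = 1"
  by (simp_all add: Ufun_def)

lemma NW_Lj: "NW (Lj m) = Suc m"
  by (simp add: NW_def Lj_floor less_imp_le)

lemma NW_0[simp]: "NW 0 = 1" using NW_Lj[of 0] by simp

lemma NW_between: assumes "Lj m < y" "y < Lj (Suc m)" shows "NW y = Suc m"
proof -
  have y: "0 \<le> y" "y < 1" using assms Lj_ge0[of m] Lj_lt1[of "Suc m"] by linarith+
  have "Lj (nat \<lfloor>y/(1-y)\<rfloor>) \<le> y" "y < Lj (Suc (nat \<lfloor>y/(1-y)\<rfloor>))" using Lj_locate[OF y] by auto
  hence "nat \<lfloor>y/(1-y)\<rfloor> < Suc m" "m < Suc (nat \<lfloor>y/(1-y)\<rfloor>)"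
    using assms by (metis Lj_less_iff le_less_trans, metis Lj_less_iff less_trans)
  hence "nat \<lfloor>y/(1-y)\<rfloor> = m" by simp
  thus ?thesis using y by (simp add: NW_def)
qed

lemma PU_Lj: "PU D jr jl (Lj m) = jr m + 1 + (if m = 0 then 0 else jl (m - 1))"
proof -
  have z: "Punit (Lj k) (Lj (Suc k)) (D k) (jr k) (jl k) (Lj m) = 0" if "Suc k < m" for k
    using that by (auto simp: Punit_def ind_def)
  show ?thesis
  proof (cases m)
    case 0 thus ?thesis by (simp add: PU_def Punit_def ind_def)
  next
    case (Suc m')
    have "(\<Sum>k<m'. Punit (Lj k) (Lj (Suc k)) (D k) (jr k) (jl k) (Lj m)) = 0"
      using z Suc by simp
    thus ?thesis using Suc by (simp add: PU_def NW_Lj Punit_def ind_def)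
  qed
qed

lemma PU_between: assumes "Lj m < y" "y < Lj (Suc m)" shows "PU D jr jl y = 2 * D m - 1"
proof -
  have z: "Punit (Lj k) (Lj (Suc k)) (D k) (jr k) (jl k) y = 0" if "k < m" for k
  proof -
    have "Lj (Suc k) \<le> Lj m" "Lj k < Lj (Suc k)" using that by simp_all
    hence "y \<noteq> Lj k" "\<not> (Lj k < y \<and> y < Lj (Suc k))" "y \<noteq> Lj (Suc k)" using assms by linarith+
    thus ?thesis unfolding Punit_def ind_def by presburger
  qed
  have "(\<Sum>k<m. Punit (Lj k) (Lj (Suc k)) (D k) (jr k) (jl k) y) = 0" using z by simp
  thus ?thesis using assms by (simp add: PU_def NW_between Punit_def ind_def)
qed

lemma PU_out: assumes "y < 0 \<or> 1 \<le> y" shows "PU D jr jl y = 0"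
  using assms by (auto simp: PU_def NW_def)

lemma locate:
  fixes y :: real
  obtains "y < 0" | m where "y = Lj m" | m where "Lj m < y" "y < Lj (Suc m)" | "1 \<le> y"
proof -
  consider "y < 0" | "0 \<le> y \<and> y < 1" | "1 \<le> y" by linarith
  thus ?thesis
  proof cases
    case 2
    define m where "m = nat \<lfloor>y/(1-y)\<rfloor>"
    have l: "Lj m \<le> y" "y < Lj (Suc m)" using Lj_locate 2 by (simp_all add: m_def)
    show ?thesis
    proof (cases "y = Lj m")
      case True thus ?thesis using that(2) by blast
    next
      case False
      hence "Lj m < y" using l by simp
      thus ?thesis using that(3) l(2) by blast
    qed
  qed (use that in auto)
qed

lemma lvc: assumes "prof f P"
  shows "finite {t\<in>{0..1}. f t = y} \<and> card {t\<in>{0..1}. f t = y} = P y + ind (f 1 = y)"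
proof -
  have e: "{t\<in>{0..1}. f t = y} = lv f y \<union> (if f 1 = y then {1} else {})"
  proof (rule set_eqI, rule iffI)
    fix t assume t: "t \<in> {t\<in>{0..1}. f t = y}"
    show "t \<in> lv f y \<union> (if f 1 = y then {1} else {})"
    proof (cases "t = 1")
      case True thus ?thesis using t by auto
    next
      case False thus ?thesis using t by (auto simp: lv_def)
    qed
  qed (auto simp: lv_def split: if_splits)
  have d: "lv f y \<inter> (if f 1 = y then {1} else {}) = {}" by (auto simp: lv_def)
  have f: "finite (lv f y)" "card (lv f y) = P y" using assms by (auto simp: prof_def)
  show ?thesis unfolding e using f d by (simp add: card_Un_disjoint ind_def)
qed



definition jlf :: "(nat \<Rightarrow> nat) \<Rightarrow> (nat \<Rightarrow> nat) \<Rightarrow> nat \<Rightarrow> nat" where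
  "jlf D v k = min (v (Suc k) - 1) (D k - 1)"
definition jrf :: "(nat \<Rightarrow> nat) \<Rightarrow> (nat \<Rightarrow> nat) \<Rightarrow> nat \<Rightarrow> nat" where
  "jrf D v k = (if k = 0 then 0 else v k - 1 - jlf D v (k - 1))"
definition good :: "(nat \<Rightarrow> nat) \<Rightarrow> (nat \<Rightarrow> nat) \<Rightarrow> bool" where
  "good D v \<longleftrightarrow> (\<forall>k. 1 \<le> D k) \<and> (\<forall>m. 1 \<le> v (Suc m) \<and> v (Suc m) + 1 \<le> D m + D (Suc m))"

lemma good_jl: assumes "good D v" shows "jlf D v k < D k"
proof -
  have "1 \<le> D k" using assms by (simp add: good_def)
  moreover have "jlf D v k \<le> D k - 1" by (simp add: jlf_def)
  ultimately show ?thesis by linarith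
qed

lemma good_jr: assumes "good D v" shows "jrf D v k < D k"
proof (cases k)
  case 0
  have "1 \<le> D k" using assms by (simp add: good_def)
  thus ?thesis using 0 by (simp add: jrf_def)
next
  case (Suc m)
  have a: "1 \<le> D m" "1 \<le> D (Suc m)" "1 \<le> v (Suc m)" "v (Suc m) + 1 \<le> D m + D (Suc m)"
    using assms by (auto simp: good_def)
  thus ?thesis using Suc by (simp add: jrf_def jlf_def)
qed

lemma good_special: assumes "good D v" shows "jrf D v (Suc m) + 1 + jlf D v m = v (Suc m)"
proof -
  have a: "1 \<le> v (Suc m)" using assms by (auto simp: good_def)
  thus ?thesis by (simp add: jrf_def jlf_def)
qed

definition Uf :: "(nat \<Rightarrow> nat) \<Rightarrow> (nat \<Rightarrow> nat) \<Rightarrow> real \<Rightarrow> real" where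
  "Uf D v = Ufun D (jrf D v) (jlf D v)"

lemma prof_Uf: "good D v \<Longrightarrow> prof (Uf D v) (PU D (jrf D v) (jlf D v))"
  unfolding Uf_def by (rule prof_U) (simp_all add: good_jl good_jr)

lemma cont_Uf: "good D v \<Longrightarrow> continuous_on {0..1} (Uf D v)"
  unfolding Uf_def by (rule cont_U) (simp_all add: good_jl good_jr)

lemma Uf_0[simp]: "Uf D v 0 = 0" and Uf_1[simp]: "Uf D v 1 = 1"
  by (simp_all add: Uf_def)

lemma PUf_Lj0: "PU D (jrf D v) (jlf D v) 0 = 1"
  using PU_Lj[of D "jrf D v" "jlf D v" 0] by (simp add: jrf_def)

lemma PUf_LjS: "good D v \<Longrightarrow> PU D (jrf D v) (jlf D v) (Lj (Suc m)) = v (Suc m)"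
  using PU_Lj[of D "jrf D v" "jlf D v" "Suc m"] good_special[of D v m] by simp

lemma Omega_eq:
  assumes "\<And>x. finite {t\<in>{0..1}. f t = x}"
  shows "Omega f = enat ` range (\<lambda>x. card {t\<in>{0..1}. f t = x})"
  unfolding Omega_def ecard_def using assms by auto

lemma Omega_U:
  assumes g: "good D v"
  shows "Omega (Uf D v) = enat ` ({0, 1} \<union> range (\<lambda>m. 2 * D m - 1) \<union> range (\<lambda>m. v (Suc m)))"
proof -
  note l = lvc[OF prof_Uf[OF g]]
  let ?c = "\<lambda>y. card {t\<in>{0..1}. Uf D v t = y}"
  have c: "?c y = PU D (jrf D v) (jlf D v) y + ind (1 = y)" for y using l by simp
  have "range ?c = {0, 1} \<union> range (\<lambda>m. 2 * D m - 1) \<union> range (\<lambda>m. v (Suc m))"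
  proof (rule set_eqI, rule iffI)
    fix n assume "n \<in> range ?c"
    then obtain y where n: "n = ?c y" by auto
    show "n \<in> {0, 1} \<union> range (\<lambda>m. 2 * D m - 1) \<union> range (\<lambda>m. v (Suc m))"
    proof (cases y rule: locate)
      case 1 thus ?thesis using n c PU_out[of y] by (simp add: ind_def)
    next
      case (2 m)
      show ?thesis
      proof (cases m)
        case 0 thus ?thesis using n c 2 PUf_Lj0 by (simp add: ind_def)
      next
        case (Suc m')
        have "y \<noteq> 1" using 2 Lj_lt1[of m] by linarith
        thus ?thesis using n c 2 Suc PUf_LjS[OF g] by (simp add: ind_def)
      qed
    next
      case (3 m)
      have "y \<noteq> 1" using 3 Lj_lt1[of "Suc m"] by linarith
      thus ?thesis using n c 3 PU_between[of m y] by (simp add: ind_def)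
    next
      case 4 thus ?thesis using n c PU_out[of y] by (simp add: ind_def)
    qed
  next
    fix n assume "n \<in> {0, 1} \<union> range (\<lambda>m. 2 * D m - 1) \<union> range (\<lambda>m. v (Suc m))"
    then consider "n = 0" | "n = 1" | m where "n = 2 * D m - 1" | m where "n = v (Suc m)" by auto
    thus "n \<in> range ?c"
    proof cases
      case 1
      have "?c 2 = 0" using c PU_out[of 2] by (simp add: ind_def)
      hence "n = ?c 2" using 1 by simp
      thus ?thesis by (rule range_eqI)
    next
      case 2
      have "?c 0 = 1" using c PUf_Lj0 by (simp add: ind_def)
      hence "n = ?c 0" using 2 by simp
      thus ?thesis by (rule range_eqI)
    next
      case (3 m)
      have "Lj m < mid m" "mid m < Lj (Suc m)" by (rule mid_bounds)+
      moreover have "mid m \<noteq> 1" using calculation Lj_lt1[of "Suc m"] by linarith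
      ultimately have "?c (mid m) = 2 * D m - 1" using c PU_between[of m "mid m"] by (simp add: ind_def)
      hence "n = ?c (mid m)" using 3 by simp
      thus ?thesis by (rule range_eqI)
    next
      case (4 m)
      have "Lj (Suc m) \<noteq> 1" using Lj_lt1[of "Suc m"] by linarith
      hence "?c (Lj (Suc m)) = v (Suc m)" using c PUf_LjS[OF g] by (simp add: ind_def)
      hence "n = ?c (Lj (Suc m))" using 4 by simp
      thus ?thesis by (rule range_eqI)
    qed
  qed
  thus ?thesis by (simp add: Omega_eq[OF conjunct1[OF l]])
qed



definition Ef :: "(nat \<Rightarrow> nat) \<Rightarrow> (nat \<Rightarrow> nat) \<Rightarrow> real \<Rightarrow> real" where
  "Ef D v = cat (seg (Lj 1) 0) (cat (Uf D v) (seg 1 (Lj 1)))"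

lemma Lj_not_neg[simp]: "\<not> Lj a < 0" using Lj_ge0[of a] by linarith
lemma Lj_le1[simp]: "Lj a \<le> 1" using Lj_lt1[of a] by linarith
lemma Lj_ne1[simp]: "Lj a \<noteq> 1" using Lj_lt1[of a] by linarith
lemma Lj_not_ge1[simp]: "\<not> 1 \<le> Lj a" using Lj_lt1[of a] by linarith
lemma Lj1_pos: "0 < Lj 1" by simp
lemma Lj1_lt1: "Lj 1 < 1" by simp

lemma prof_Ef: assumes "good D v"
  shows "prof (Ef D v) (\<lambda>y. ind (0 < y \<and> y \<le> Lj 1) + (PU D (jrf D v) (jlf D v) y + ind (Lj 1 < y \<and> y \<le> 1)))"
  unfolding Ef_def
  by (rule prof_cat[OF prof_seg_down[OF Lj1_pos] prof_cat[OF prof_Uf[OF assms] prof_seg_down[OF Lj1_lt1]]]) simp_all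

lemma cont_Ef: "good D v \<Longrightarrow> continuous_on {0..1} (Ef D v)"
  unfolding Ef_def by (intro cont_cat cont_seg cont_Uf) simp_all

lemma Ef_1[simp]: "Ef D v 1 = Lj 1" by (simp add: Ef_def)

lemma Omega_E:
  assumes g: "good D v"
  shows "Omega (Ef D v) = enat ` ({0, 1} \<union> range (\<lambda>m. 2 * D m) \<union> {v 1 + 2} \<union> range (\<lambda>m. v (Suc (Suc m)) + 1))"
proof -
  note l = lvc[OF prof_Ef[OF g]]
  let ?P = "PU D (jrf D v) (jlf D v)"
  let ?c = "\<lambda>y. card {t\<in>{0..1}. Ef D v t = y}"
  let ?T = "{0, 1} \<union> range (\<lambda>m. 2 * D m) \<union> {v 1 + 2} \<union> range (\<lambda>m. v (Suc (Suc m)) + 1)"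
  have c: "?c y = ind (0 < y \<and> y \<le> Lj 1) + (?P y + ind (Lj 1 < y \<and> y \<le> 1)) + ind (Lj 1 = y)" for y
    using l by simp
  have D1: "1 \<le> D m" for m using g by (simp add: good_def)
  have c0: "?c 0 = 1" using c PUf_Lj0 Lj_ge0[of 1] by (simp add: ind_def)
  have c1: "?c (Lj 1) = v 1 + 2" using c PUf_LjS[OF g, of 0] Lj1_pos Lj1_lt1 by (simp add: ind_def)
  have cSS: "?c (Lj (Suc (Suc m))) = v (Suc (Suc m)) + 1" for m
  proof -
    have "Lj 1 < Lj (Suc (Suc m))" "Lj (Suc (Suc m)) < 1" by simp_all
    thus ?thesis using c PUf_LjS[OF g, of "Suc m"] by (simp add: ind_def)
  qed
  have cb: "?c y = 2 * D m" if "Lj m < y" "y < Lj (Suc m)" for m y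
  proof (cases m)
    case 0
    have "0 < y" "y < Lj 1" using that 0 by simp_all
    thus ?thesis using c PU_between[OF that] 0 D1[of m] by (simp add: ind_def)
  next
    case (Suc m')
    have "Lj 1 \<le> Lj m" using Suc by simp
    hence "Lj 1 < y" "y < 1" using that Lj_lt1[of "Suc m"] by linarith+
    thus ?thesis using c PU_between[OF that] D1[of m] by (simp add: ind_def)
  qed
  have "range ?c = ?T"
  proof (rule set_eqI, rule iffI)
    fix n assume "n \<in> range ?c"
    then obtain y where n: "n = ?c y" by auto
    show "n \<in> ?T"
    proof (cases y rule: locate)
      case 1 thus ?thesis using n c PU_out[of y] by (simp add: ind_def)
    next
      case (2 m)
      show ?thesis
      proof (cases m)
        case 0 thus ?thesis using n 2 c0 by simp
      next
        case (Suc m')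
        show ?thesis
        proof (cases m')
          case 0 thus ?thesis using n 2 Suc c1 by simp
        next
          case (Suc m'')
          thus ?thesis using n 2 \<open>m = Suc m'\<close> cSS[of m''] by simp
        qed
      qed
    next
      case (3 m) thus ?thesis using n cb by simp
    next
      case 4
      show ?thesis
      proof (cases "y = 1")
        case True thus ?thesis using n c PU_out[of y] Lj1_lt1 by (simp add: ind_def)
      next
        case False
        hence "1 < y" using 4 by simp
        hence h: "\<not> y \<le> Lj 1" "Lj 1 \<noteq> y" using Lj_lt1[of 1] by linarith+
        thus ?thesis using n c PU_out[of y] \<open>1 < y\<close> by (simp add: ind_def)
      qed
    qed
  next
    fix n assume "n \<in> ?T"
    then consider "n = 0" | "n = 1" | m where "n = 2 * D m" | "n = v 1 + 2"
      | m where "n = v (Suc (Suc m)) + 1" by auto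
    thus "n \<in> range ?c"
    proof cases
      case 1
      have "\<not> 2 \<le> Lj 1" "Lj 1 \<noteq> 2" using Lj_lt1[of 1] by linarith+
      hence "?c 2 = 0" using c PU_out[of 2] by (simp add: ind_def)
      hence "n = ?c 2" using 1 by simp
      thus ?thesis by (rule range_eqI)
    next
      case 2 hence "n = ?c 0" using c0 by simp
      thus ?thesis by (rule range_eqI)
    next
      case (3 m)
      have "?c (mid m) = 2 * D m" by (rule cb) (rule mid_bounds)+
      hence "n = ?c (mid m)" using 3 by simp
      thus ?thesis by (rule range_eqI)
    next
      case 4 hence "n = ?c (Lj 1)" using c1 by simp
      thus ?thesis by (rule range_eqI)
    next
      case (5 m) hence "n = ?c (Lj (Suc (Suc m)))" using cSS by simp
      thus ?thesis by (rule range_eqI)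
    qed
  qed
  thus ?thesis by (simp add: Omega_eq[OF conjunct1[OF l]])
qed



lemma tent:
  shows "continuous_on {0..1} (cat (seg 1 0) (seg 0 1)) \<and> Omega (cat (seg 1 0) (seg 0 1)) = enat ` {0, 1, 2}"
proof -
  let ?f = "cat (seg 1 0) (seg 0 1)"
  have p: "prof ?f (\<lambda>y. ind (0 < y \<and> y \<le> 1) + ind (0 \<le> y \<and> y < 1))"
    by (rule prof_cat[OF prof_seg_down prof_seg_up]) simp_all
  note l = lvc[OF p]
  let ?c = "\<lambda>y. card {t\<in>{0..1}. ?f t = y}"
  have c: "?c y = ind (0 < y \<and> y \<le> 1) + ind (0 \<le> y \<and> y < 1) + ind (1 = y)" for y
    using l by simp
  have "range ?c = {0, 1, 2}"
  proof (rule set_eqI, rule iffI)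
    fix n assume "n \<in> range ?c"
    then obtain y where "n = ?c y" by auto
    thus "n \<in> {0, 1, 2}" using c[of y] by (auto simp: ind_def)
  next
    fix n :: nat assume "n \<in> {0, 1, 2}"
    moreover have "?c 2 = 0" "?c 0 = 1" "?c (1/2) = 2" by (subst c, simp add: ind_def)+
    ultimately have "n = ?c 2 \<or> n = ?c 0 \<or> n = ?c (1/2)" by auto
    thus "n \<in> range ?c" by (elim disjE) (rule range_eqI, assumption)+
  qed
  moreover have "continuous_on {0..1} ?f" by (intro cont_cat cont_seg) simp
  ultimately show ?thesis by (simp add: Omega_eq[OF conjunct1[OF l]])
qed

section \<open>The odd design\<close>

locale SS =
  fixes S :: "nat set"
  assumes S0: "0 \<in> S" and S1: "1 \<in> S"
begin

definition T where "T = S - {0, 1}"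
definition xo :: "nat \<Rightarrow> nat" where
  "xo n = (if T = {} then 1 else if n \<in> T then n else (SOME t. t \<in> T))"

lemma xo_in: "xo n \<in> S \<and> xo n \<ge> 1"
proof (cases "T = {}")
  case True thus ?thesis using S1 by (simp add: xo_def)
next
  case False
  have "(SOME t. t \<in> T) \<in> T" using False by (simp add: some_in_eq)
  hence "xo n \<in> T" using False by (simp add: xo_def)
  thus ?thesis by (auto simp: T_def)
qed

lemma T_ge2: "t \<in> T \<Longrightarrow> t \<ge> 2" by (auto simp: T_def)

definition ochoice :: "nat \<Rightarrow> nat" where
  "ochoice n = (if odd (xo n) then xo n else (SOME q. q \<in> S \<and> odd q \<and> xo n \<le> q))"

definition Dodd :: "nat \<Rightarrow> nat" where "Dodd k = (ochoice (k div 2) + 1) div 2"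
definition vodd :: "nat \<Rightarrow> nat" where "vodd m = (if odd m then xo (m div 2) else 1)"

lemma ochoice_prop:
  assumes B: "\<forall>e\<in>S. even e \<and> 2 \<le> e \<longrightarrow> (\<exists>q\<in>S. odd q \<and> e \<le> q)"
  shows "ochoice n \<in> S \<and> odd (ochoice n) \<and> xo n \<le> ochoice n"
proof (cases "odd (xo n)")
  case True thus ?thesis using xo_in by (simp add: ochoice_def)
next
  case False
  have "xo n \<noteq> 1" using False by auto
  have "T \<noteq> {}" using \<open>xo n \<noteq> 1\<close> by (auto simp: xo_def)
  hence "(SOME t. t \<in> T) \<in> T" by (simp add: some_in_eq)
  hence "xo n \<in> T" using \<open>T \<noteq> {}\<close> by (simp add: xo_def)
  hence "2 \<le> xo n" by (rule T_ge2)
  hence "\<exists>q. q \<in> S \<and> odd q \<and> xo n \<le> q" using B xo_in[of n] False by blast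
  hence "(SOME q. q \<in> S \<and> odd q \<and> xo n \<le> q) \<in> S \<and> odd (SOME q. q \<in> S \<and> odd q \<and> xo n \<le> q)
       \<and> xo n \<le> (SOME q. q \<in> S \<and> odd q \<and> xo n \<le> q)" by (rule someI_ex)
  thus ?thesis using False by (simp add: ochoice_def)
qed

lemma xo_T: "t \<in> T \<Longrightarrow> xo t = t" by (auto simp: xo_def)

end



context SS begin

lemma odd_design:
  assumes B: "\<forall>e\<in>S. even e \<and> 2 \<le> e \<longrightarrow> (\<exists>q\<in>S. odd q \<and> e \<le> q)"
  shows "good Dodd vodd" "{0, 1} \<union> range (\<lambda>m. 2 * Dodd m - 1) \<union> range (\<lambda>m. vodd (Suc m)) = S"
proof -
  note op = ochoice_prop[OF B]
  have D2: "2 * Dodd k - 1 = ochoice (k div 2)" for k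
  proof -
    obtain r where "ochoice (k div 2) = 2 * r + 1" using op[of "k div 2"] oddE by blast
    thus ?thesis by (simp add: Dodd_def)
  qed
  have D2': "2 * Dodd k = ochoice (k div 2) + 1" for k
  proof -
    obtain r where "ochoice (k div 2) = 2 * r + 1" using op[of "k div 2"] oddE by blast
    thus ?thesis by (simp add: Dodd_def)
  qed
  have Dge: "1 \<le> Dodd k" for k using D2'[of k] by simp
  show "good Dodd vodd"
    unfolding good_def
  proof (intro conjI allI)
    fix k show "1 \<le> Dodd k" by (rule Dge)
  next
    fix m
    show "1 \<le> vodd (Suc m)" using xo_in by (simp add: vodd_def)
    show "vodd (Suc m) + 1 \<le> Dodd m + Dodd (Suc m)"
    proof (cases "even m")
      case True
      then obtain n where m: "m = 2 * n" by blast
      have "Dodd m = Dodd (Suc m)" using m by (simp add: Dodd_def)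
      moreover have "vodd (Suc m) = xo n" using m by (simp add: vodd_def)
      moreover have "xo n \<le> ochoice n" using op by simp
      moreover have "2 * Dodd m = ochoice n + 1" using D2'[of m] m by simp
      ultimately show ?thesis by simp
    next
      case False
      hence "vodd (Suc m) = 1" by (simp add: vodd_def)
      thus ?thesis using Dge[of m] Dge[of "Suc m"] by simp
    qed
  qed
  show "{0, 1} \<union> range (\<lambda>m. 2 * Dodd m - 1) \<union> range (\<lambda>m. vodd (Suc m)) = S"
  proof (rule set_eqI, rule iffI)
    fix s assume "s \<in> {0, 1} \<union> range (\<lambda>m. 2 * Dodd m - 1) \<union> range (\<lambda>m. vodd (Suc m))"
    thus "s \<in> S" using S0 S1 D2 op xo_in by (auto simp: vodd_def)
  next
    fix s assume s: "s \<in> S"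
    show "s \<in> {0, 1} \<union> range (\<lambda>m. 2 * Dodd m - 1) \<union> range (\<lambda>m. vodd (Suc m))"
    proof (cases "s \<in> {0, 1}")
      case True thus ?thesis by blast
    next
      case False
      hence "s \<in> T" using s by (simp add: T_def)
      hence "vodd (Suc (2 * s)) = s" by (simp add: vodd_def xo_T)
      hence "s \<in> range (\<lambda>m. vodd (Suc m))" by (intro range_eqI[where x="2 * s"]) simp
      thus ?thesis by blast
    qed
  qed
qed

end

locale SE = SS +
  fixes es :: nat
  assumes es_S: "es \<in> S" and es_even: "even es" and es4: "4 \<le> es"
    and es_big: "\<And>q. q \<in> S \<Longrightarrow> odd q \<Longrightarrow> 3 \<le> q \<Longrightarrow> q < es"
begin

definition Ds where "Ds = es div 2"
definition xe :: "nat \<Rightarrow> nat" where "xe n = (if n \<in> T then n else es)"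
definition Dx :: "nat \<Rightarrow> nat" where "Dx n = (if odd (xe n) then Ds else xe n div 2)"
definition Dev :: "nat \<Rightarrow> nat" where
  "Dev k = (if k < 2 then Ds else if (k - 2) mod 3 = 1 then Dx ((k - 2) div 3) else Ds)"
definition w1 :: "nat \<Rightarrow> nat" where "w1 n = (if odd (xe n) then xe n else min es (xe n))"
definition w2 :: "nat \<Rightarrow> nat" where "w2 n = (if odd (xe n) then es else min es (xe n))"
definition vev :: "nat \<Rightarrow> nat" where
  "vev m = (if m = 0 then 1 else if m = 1 then es - 2 else if (m - 2) mod 3 = 0 then es - 1
            else if (m - 2) mod 3 = 1 then w1 ((m - 2) div 3) - 1 else w2 ((m - 2) div 3) - 1)"

lemma es_T: "es \<in> T" using es_S es4 by (auto simp: T_def)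
lemma xe_T: "xe n \<in> T" using es_T by (simp add: xe_def)
lemma xe_S: "xe n \<in> S" using xe_T by (auto simp: T_def)
lemma xe_ge2: "2 \<le> xe n" using T_ge2[OF xe_T] .
lemma xe_odd: "odd (xe n) \<Longrightarrow> xe n < es \<and> 3 \<le> xe n"
proof -
  assume o: "odd (xe n)"
  have "xe n \<noteq> 2" using o by auto
  hence "3 \<le> xe n" using xe_ge2[of n] by simp
  thus ?thesis using es_big[OF xe_S o] by simp
qed
lemma Ds2: "2 * Ds = es" using es_even by (simp add: Ds_def)
lemma Dx_ge: "1 \<le> Dx n" using xe_ge2[of n] es4 by (auto simp: Dx_def Ds_def)
lemma Dx2: "2 * Dx n = (if odd (xe n) then es else xe n)"
  using Ds2 by (auto simp: Dx_def)

lemma w1_bounds: "2 \<le> w1 n \<and> w1 n \<le> Ds + Dx n \<and> w1 n \<in> S"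
proof (cases "odd (xe n)")
  case True
  have "w1 n = xe n" "Dx n = Ds" using True by (simp_all add: w1_def Dx_def)
  thus ?thesis using xe_odd[OF True] Ds2 xe_S[of n] by simp
next
  case False
  have w: "w1 n = min es (xe n)" "2 * Dx n = xe n" using False Dx2[of n] by (simp_all add: w1_def)
  have "min es (xe n) \<in> S" using es_S xe_S[of n] by (simp add: min_def)
  moreover have "2 \<le> min es (xe n)" using es4 xe_ge2[of n] by simp
  moreover have "min es (xe n) \<le> Ds + Dx n" using w(2) Ds2 by linarith
  ultimately show ?thesis using w by simp
qed
lemma w2_bounds: "2 \<le> w2 n \<and> w2 n \<le> Dx n + Ds \<and> w2 n \<in> S"
proof (cases "odd (xe n)")
  case True
  have "w2 n = es" "Dx n = Ds" using True by (simp_all add: w2_def Dx_def)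
  thus ?thesis using es4 Ds2 es_S by simp
next
  case False
  have w: "w2 n = min es (xe n)" "2 * Dx n = xe n" using False Dx2[of n] by (simp_all add: w2_def)
  have "min es (xe n) \<in> S" using es_S xe_S[of n] by (simp add: min_def)
  moreover have "2 \<le> min es (xe n)" using es4 xe_ge2[of n] by simp
  moreover have "min es (xe n) \<le> Dx n + Ds" using w(2) Ds2 by linarith
  ultimately show ?thesis using w by simp
qed

lemma m_cases:
  fixes m :: nat
  obtains "m = 0" | n where "m = 3 * n + 1" | n where "m = 3 * n + 2" | n where "m = 3 * n + 3"
proof -
  have "(m - 1) mod 3 < 3" by simp
  hence "(m - 1) mod 3 = 0 \<or> (m - 1) mod 3 = 1 \<or> (m - 1) mod 3 = 2" by linarith
  then consider "m = 0" | "m \<noteq> 0 \<and> (m - 1) mod 3 = 0" | "m \<noteq> 0 \<and> (m - 1) mod 3 = 1" | "m \<noteq> 0 \<and> (m - 1) mod 3 = 2"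
    by blast
  thus ?thesis
  proof cases
    case 1 thus ?thesis using that by simp
  next
    case 2 hence "m = 3 * ((m - 1) div 3) + 1" using div_mult_mod_eq[of "m - 1" 3] by linarith
    thus ?thesis using that by blast
  next
    case 3 hence "m = 3 * ((m - 1) div 3) + 2" using div_mult_mod_eq[of "m - 1" 3] by linarith
    thus ?thesis using that by blast
  next
    case 4 hence "m = 3 * ((m - 1) div 3) + 3" using div_mult_mod_eq[of "m - 1" 3] by linarith
    thus ?thesis using that by blast
  qed
qed

lemma Dev_3n1: "Dev (3 * n + 1) = Ds"
proof (cases n)
  case 0 thus ?thesis by (simp add: Dev_def)
next
  case (Suc n')
  have "3 * n + 1 - 2 = 3 * n' + 2" using Suc by simp
  hence "(3 * n + 1 - 2) mod 3 = 2" by presburger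
  thus ?thesis using Suc by (simp add: Dev_def)
qed
lemma Dev_3n2: "Dev (3 * n + 2) = Ds" by (simp add: Dev_def)
lemma Dev_3n3: "Dev (3 * n + 3) = Dx n"
proof -
  have "3 * n + 3 - 2 = 3 * n + 1" by simp
  hence "(3 * n + 3 - 2) mod 3 = 1" "(3 * n + 3 - 2) div 3 = n" by presburger+
  thus ?thesis by (simp add: Dev_def)
qed
lemma vev_3n2: "vev (3 * n + 2) = es - 1" by (simp add: vev_def)
lemma vev_3n3: "vev (3 * n + 3) = w1 n - 1"
proof -
  have "3 * n + 3 - 2 = 3 * n + 1" by simp
  hence "(3 * n + 3 - 2) mod 3 = 1" "(3 * n + 3 - 2) div 3 = n" by presburger+
  thus ?thesis by (simp add: vev_def)
qed
lemma vev_3n4: "vev (3 * n + 4) = w2 n - 1"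
proof -
  have "3 * n + 4 - 2 = 3 * n + 2" by simp
  hence "(3 * n + 4 - 2) mod 3 = 2" "(3 * n + 4 - 2) div 3 = n" by presburger+
  thus ?thesis by (simp add: vev_def)
qed

lemma Dev_cases: "Dev k = Ds \<or> (\<exists>n. Dev k = Dx n)"
  by (auto simp: Dev_def)

lemma even_design:
  shows "good Dev vev"
    "{0, 1} \<union> range (\<lambda>m. 2 * Dev m) \<union> {vev 1 + 2} \<union> range (\<lambda>m. vev (Suc (Suc m)) + 1) = S"
proof -
  have Dsge: "2 \<le> Ds" using es4 Ds2 by simp
  have Dge: "1 \<le> Dev k" for k using Dev_cases[of k] Dsge Dx_ge by auto
  show "good Dev vev"
    unfolding good_def
  proof (intro conjI allI)
    fix k show "1 \<le> Dev k" by (rule Dge)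
  next
    fix m
    have "1 \<le> vev (Suc m) \<and> vev (Suc m) + 1 \<le> Dev m + Dev (Suc m)"
    proof (cases m rule: m_cases)
      case 1
      hence "vev (Suc m) = es - 2" "Dev m = Ds" "Dev (Suc m) = Ds" by (simp_all add: vev_def Dev_def)
      thus ?thesis using es4 Ds2 by linarith
    next
      case (2 n)
      have e: "Suc m = 3 * n + 2" using 2 by simp
      have "vev (Suc m) = es - 1" unfolding e by (rule vev_3n2)
      moreover have "Dev m = Ds" unfolding 2 by (rule Dev_3n1)
      moreover have "Dev (Suc m) = Ds" unfolding e by (rule Dev_3n2)
      ultimately have "vev (Suc m) = es - 1" "Dev m = Ds" "Dev (Suc m) = Ds" by simp_all
      thus ?thesis using es4 Ds2 by linarith
    next
      case (3 n)
      have e: "Suc m = 3 * n + 3" using 3 by simp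
      have "vev (Suc m) = w1 n - 1" unfolding e by (rule vev_3n3)
      moreover have "Dev m = Ds" unfolding 3 by (rule Dev_3n2)
      moreover have "Dev (Suc m) = Dx n" unfolding e by (rule Dev_3n3)
      ultimately have "vev (Suc m) = w1 n - 1" "Dev m = Ds" "Dev (Suc m) = Dx n" by simp_all
      thus ?thesis using w1_bounds[of n] by linarith
    next
      case (4 n)
      have e: "Suc m = 3 * (Suc n) + 1" using 4 by simp
      have "vev (Suc m) = w2 n - 1" using vev_3n4[of n] 4 by (simp add: numeral_eq_Suc)
      moreover have "Dev m = Dx n" unfolding 4 by (rule Dev_3n3)
      moreover have "Dev (Suc m) = Ds" unfolding e by (rule Dev_3n1)
      ultimately show ?thesis using w2_bounds[of n] by linarith
    qed
    thus "1 \<le> vev (Suc m)" "vev (Suc m) + 1 \<le> Dev m + Dev (Suc m)" by simp_all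
  qed
  show "{0, 1} \<union> range (\<lambda>m. 2 * Dev m) \<union> {vev 1 + 2} \<union> range (\<lambda>m. vev (Suc (Suc m)) + 1) = S"
  proof (rule set_eqI, rule iffI)
    fix s assume s: "s \<in> {0, 1} \<union> range (\<lambda>m. 2 * Dev m) \<union> {vev 1 + 2} \<union> range (\<lambda>m. vev (Suc (Suc m)) + 1)"
    have a: "2 * Dev k \<in> S" for k
    proof -
      consider "Dev k = Ds" | n where "Dev k = Dx n" using Dev_cases[of k] by blast
      thus ?thesis
      proof cases
        case 1 thus ?thesis using Ds2 es_S by simp
      next
        case (2 n) thus ?thesis using Dx2[of n] es_S xe_S[of n] by simp
      qed
    qed
    have "vev 1 + 2 = es" using es4 by (simp add: vev_def)
    hence b: "vev 1 + 2 \<in> S" using es_S by simp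
    have c: "vev (Suc (Suc m)) + 1 \<in> S" for m
    proof (cases "Suc (Suc m)" rule: m_cases)
      case 1 thus ?thesis by simp
    next
      case (2 n) hence "n \<ge> 1" by simp
      hence e: "Suc (Suc m) = 3 * (n - 1) + 4" using 2 by simp
      have "vev (Suc (Suc m)) = w2 (n - 1) - 1" unfolding e by (rule vev_3n4)
      thus ?thesis using w2_bounds[of "n - 1"] by simp
    next
      case (3 n)
      have "vev (Suc (Suc m)) = es - 1" unfolding 3 by (rule vev_3n2)
      thus ?thesis using es_S es4 by simp
    next
      case (4 n)
      have "vev (Suc (Suc m)) = w1 n - 1" unfolding 4 by (rule vev_3n3)
      thus ?thesis using w1_bounds[of n] by simp
    qed
    show "s \<in> S" using s a b c S0 S1 by auto
  next
    fix s assume s: "s \<in> S"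
    show "s \<in> {0, 1} \<union> range (\<lambda>m. 2 * Dev m) \<union> {vev 1 + 2} \<union> range (\<lambda>m. vev (Suc (Suc m)) + 1)"
    proof (cases "s \<in> {0, 1}")
      case True thus ?thesis by blast
    next
      case False
      hence sT: "s \<in> T" using s by (simp add: T_def)
      hence xs: "xe s = s" by (simp add: xe_def)
      show ?thesis
      proof (cases "odd s")
        case True
        have e: "Suc (Suc (3 * s + 1)) = 3 * s + 3" by simp
        have "vev (Suc (Suc (3 * s + 1))) = w1 s - 1" unfolding e by (rule vev_3n3)
        hence "vev (Suc (Suc (3 * s + 1))) + 1 = s"
          using xs True w1_bounds[of s] by (simp add: w1_def)
        hence "s \<in> range (\<lambda>m. vev (Suc (Suc m)) + 1)" by (intro range_eqI[where x="3 * s + 1"]) simp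
        thus ?thesis by blast
      next
        case False
        have "2 * Dev (3 * s + 3) = s" using Dev_3n3[of s] Dx2[of s] xs False by simp
        hence "s \<in> range (\<lambda>m. 2 * Dev m)" by (intro range_eqI[where x="3 * s + 3"]) simp
        thus ?thesis by blast
      qed
    qed
  qed
qed

end



theorem proposition1:
  fixes S :: "nat set"
  assumes "0 \<in> S" and "1 \<in> S"
  shows "\<exists>f :: real \<Rightarrow> real. continuous_on {0..1} f \<and> Omega f = enat ` S"
proof -
  interpret SS S using assms by unfold_locales
  consider (A) "S = {0, 1, 2}"
    | (B) "\<forall>e\<in>S. even e \<and> 2 \<le> e \<longrightarrow> (\<exists>q\<in>S. odd q \<and> e \<le> q)"
    | (C) "S \<noteq> {0, 1, 2}" "\<not> (\<forall>e\<in>S. even e \<and> 2 \<le> e \<longrightarrow> (\<exists>q\<in>S. odd q \<and> e \<le> q))"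
    by blast
  thus ?thesis
  proof cases
    case A thus ?thesis using tent by blast
  next
    case B
    note od = odd_design[OF B]
    have "continuous_on {0..1} (Uf Dodd vodd)" by (rule cont_Uf[OF od(1)])
    moreover have "Omega (Uf Dodd vodd) = enat ` S" using Omega_U[OF od(1), unfolded od(2)] .
    ultimately show ?thesis by blast
  next
    case C
    from C(2) obtain e where e: "e \<in> S" "even e" "2 \<le> e" "\<And>q. q \<in> S \<Longrightarrow> odd q \<Longrightarrow> q < e"
      by (auto simp: not_le)
    obtain es where es: "es \<in> S" "even es" "4 \<le> es" "\<And>q. q \<in> S \<Longrightarrow> odd q \<Longrightarrow> 3 \<le> q \<Longrightarrow> q < es"
    proof (cases "4 \<le> e")
      case True thus ?thesis using that e by blast
    next
      case False
      hence e2: "e = 2" using e(2,3) by presburger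
      have sub: "{0, 1, 2} \<subseteq> S" using assms e e2 by auto
      obtain s where s: "s \<in> S" "s \<notin> {0, 1, 2}" using C(1) sub by blast
      have "\<not> odd s" using e(4)[of s] s e2 by auto
      hence ev: "even s" by simp
      have "s \<noteq> 0" "s \<noteq> 1" "s \<noteq> 2" using s by auto
      hence "s \<noteq> 3" "2 \<le> s" using ev by auto
      hence "4 \<le> s" using \<open>s \<noteq> 2\<close> by linarith
      note ev this
      moreover have "\<And>q. q \<in> S \<Longrightarrow> odd q \<Longrightarrow> 3 \<le> q \<Longrightarrow> q < s" using e(4) e2 by fastforce
      ultimately show ?thesis using that s(1) by blast
    qed
    interpret SE S es using es by unfold_locales auto
    have "continuous_on {0..1} (Ef Dev vev)" by (rule cont_Ef[OF even_design(1)])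
    moreover have "Omega (Ef Dev vev) = enat ` S" using Omega_E[OF even_design(1), unfolded even_design(2)] .
    ultimately show ?thesis by blast
  qed
qed


end
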